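(* Let $\mathcal C$ be a covariantly finite subcategory of the category of all finitely presented right $R$-modules, and let $T$ be a module in $\varinjlim\mathcal C$. Assume that for every direct system $(C_n,c_{mn}\mid n\le m<\omega)$ of modules from $\mathcal C$ indexed by $\omega$, the inverse system $(\mathrm{Hom}_R(C_n,T),\mathrm{Hom}_R(c_{mn},T))_{n<\omega}$ is Mittag-Leffler. Then $T$ is $\Sigma$-pure-injective.
   Context: $\mathcal C$ covariantly finite in the category of finitely presented modules means every finitely presented module $F$ admits a map $p:F\to C$ with $C\in\mathcal C$ through which every map from $F$ to a module of $\mathcal C$ factors. $\varinjlim\mathcal C$ is the class of all direct limits of direct systems of modules from $\mathcal C$. An inverse system $(H_n,h_{nm})$ is Mittag-Leffler if for each $n$ there is $m\ge n$ with $\mathrm{Im}(h_{nk})=\mathrm{Im}(h_{nm})$ for all $k\ge m$. $T$ is $\Sigma$-pure-injective if every direct sum of copies of $T$ is pure-injective. *)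

theory Defs
  imports Main "HOL-Library.FuncSet"
begin

record ('r, 'm) rmod =
  mcarrier :: "'m set"
  madd :: "'m \<Rightarrow> 'm \<Rightarrow> 'm"
  mzero :: 'm
  mact :: "'m \<Rightarrow> 'r \<Rightarrow> 'm"

definition right_module :: "('r::ring_1, 'm) rmod \<Rightarrow> bool" where
  "right_module M \<longleftrightarrow>
     mzero M \<in> mcarrier M \<and>
     (\<forall>x\<in>mcarrier M. \<forall>y\<in>mcarrier M. madd M x y \<in> mcarrier M) \<and>
     (\<forall>x\<in>mcarrier M. \<forall>r. mact M x r \<in> mcarrier M) \<and>
     (\<forall>x\<in>mcarrier M. \<forall>y\<in>mcarrier M. \<forall>z\<in>mcarrier M.
        madd M (madd M x y) z = madd M x (madd M y z)) \<and>
     (\<forall>x\<in>mcarrier M. \<forall>y\<in>mcarrier M. madd M x y = madd M y x) \<and>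
     (\<forall>x\<in>mcarrier M. madd M (mzero M) x = x) \<and>
     (\<forall>x\<in>mcarrier M. \<exists>y\<in>mcarrier M. madd M x y = mzero M) \<and>
     (\<forall>x\<in>mcarrier M. \<forall>y\<in>mcarrier M. \<forall>r.
        mact M (madd M x y) r = madd M (mact M x r) (mact M y r)) \<and>
     (\<forall>x\<in>mcarrier M. \<forall>r s. mact M x (r + s) = madd M (mact M x r) (mact M x s)) \<and>
     (\<forall>x\<in>mcarrier M. \<forall>r s. mact M x (r * s) = mact M (mact M x r) s) \<and>
     (\<forall>x\<in>mcarrier M. mact M x 1 = x)"

primrec msum :: "('r, 'm) rmod \<Rightarrow> (nat \<Rightarrow> 'm) \<Rightarrow> nat \<Rightarrow> 'm" where
  "msum M f 0 = mzero M"
| "msum M f (Suc n) = madd M (msum M f n) (f n)"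

definition rhom :: "('r::ring_1, 'm) rmod \<Rightarrow> ('r, 'n) rmod \<Rightarrow> ('m \<Rightarrow> 'n) set" where
  "rhom M N = {f. f \<in> mcarrier M \<rightarrow>\<^sub>E mcarrier N \<and>
      (\<forall>x\<in>mcarrier M. \<forall>y\<in>mcarrier M. f (madd M x y) = madd N (f x) (f y)) \<and>
      (\<forall>x\<in>mcarrier M. \<forall>r. f (mact M x r) = mact N (f x) r)}"

definition fin_pres :: "('r::ring_1, 'm) rmod \<Rightarrow> bool" where
  "fin_pres M \<longleftrightarrow> right_module M \<and>
     (\<exists>n (x :: nat \<Rightarrow> 'm). (\<forall>i<n. x i \<in> mcarrier M) \<and>
        (\<forall>y\<in>mcarrier M. \<exists>a::nat \<Rightarrow> 'r. y = msum M (\<lambda>i. mact M (x i) (a i)) n) \<and>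
        (\<exists>k (rel :: nat \<Rightarrow> nat \<Rightarrow> 'r).
           (\<forall>j<k. msum M (\<lambda>i. mact M (x i) (rel j i)) n = mzero M) \<and>
           (\<forall>a::nat \<Rightarrow> 'r. msum M (\<lambda>i. mact M (x i) (a i)) n = mzero M \<longrightarrow>
              (\<exists>s::nat \<Rightarrow> 'r. \<forall>i<n. a i = (\<Sum>j<k. rel j i * s j)))))"

text \<open>C is given by a set of (representatives of) finitely presented modules;
  every finitely presented module is isomorphic to one whose elements are subsets of
  nat => 'r (cosets of R^n), so it suffices to quantify F over that type.\<close>
definition cov_finite :: "('r::ring_1, 'c) rmod set \<Rightarrow> bool" where
  "cov_finite \<C> \<longleftrightarrow> (\<forall>C\<in>\<C>. fin_pres C) \<and>
     (\<forall>F :: ('r, (nat \<Rightarrow> 'r) set) rmod. fin_pres F \<longrightarrow>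
        (\<exists>Cp\<in>\<C>. \<exists>p\<in>rhom F Cp. \<forall>C'\<in>\<C>. \<forall>g\<in>rhom F C'.
            \<exists>h\<in>rhom Cp C'. \<forall>x\<in>mcarrier F. g x = h (p x)))"

text \<open>T is a direct limit of a direct system of modules from C indexed by a directed
  poset (I, le) with index type 'i (concrete description of the direct limit:
  compatible maps g_i : D_i -> T, jointly surjective, with g_i x = 0 iff x dies in
  some D_j).\<close>
definition in_dirlim :: "'i itself \<Rightarrow> ('r::ring_1, 'c) rmod set \<Rightarrow> ('r, 'm) rmod \<Rightarrow> bool" where
  "in_dirlim _ \<C> T \<longleftrightarrow> right_module T \<and>
     (\<exists>(I :: 'i set) (le :: 'i \<Rightarrow> 'i \<Rightarrow> bool) (D :: 'i \<Rightarrow> ('r, 'c) rmod)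
        (f :: 'i \<Rightarrow> 'i \<Rightarrow> 'c \<Rightarrow> 'c) (g :: 'i \<Rightarrow> 'c \<Rightarrow> 'm).
        I \<noteq> {} \<and>
        (\<forall>i\<in>I. le i i) \<and>
        (\<forall>i\<in>I. \<forall>j\<in>I. \<forall>k\<in>I. le i j \<and> le j k \<longrightarrow> le i k) \<and>
        (\<forall>i\<in>I. \<forall>j\<in>I. le i j \<and> le j i \<longrightarrow> i = j) \<and>
        (\<forall>i\<in>I. \<forall>j\<in>I. \<exists>k\<in>I. le i k \<and> le j k) \<and>
        (\<forall>i\<in>I. D i \<in> \<C>) \<and>
        (\<forall>i\<in>I. \<forall>j\<in>I. le i j \<longrightarrow> f i j \<in> rhom (D i) (D j)) \<and>
        (\<forall>i\<in>I. \<forall>x\<in>mcarrier (D i). f i i x = x) \<and>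
        (\<forall>i\<in>I. \<forall>j\<in>I. \<forall>k\<in>I. le i j \<and> le j k \<longrightarrow>
            (\<forall>x\<in>mcarrier (D i). f j k (f i j x) = f i k x)) \<and>
        (\<forall>i\<in>I. g i \<in> rhom (D i) T) \<and>
        (\<forall>i\<in>I. \<forall>j\<in>I. le i j \<longrightarrow> (\<forall>x\<in>mcarrier (D i). g j (f i j x) = g i x)) \<and>
        mcarrier T = (\<Union>i\<in>I. g i ` mcarrier (D i)) \<and>
        (\<forall>i\<in>I. \<forall>x\<in>mcarrier (D i). g i x = mzero T \<longrightarrow>
            (\<exists>j\<in>I. le i j \<and> f i j x = mzero (D j))))"

definition omega_dirsys :: "(nat \<Rightarrow> ('r::ring_1, 'c) rmod) \<Rightarrow> (nat \<Rightarrow> nat \<Rightarrow> 'c \<Rightarrow> 'c) \<Rightarrow> bool" where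
  "omega_dirsys D c \<longleftrightarrow>
     (\<forall>n m. n \<le> m \<longrightarrow> c m n \<in> rhom (D n) (D m)) \<and>
     (\<forall>n. \<forall>x\<in>mcarrier (D n). c n n x = x) \<and>
     (\<forall>n m k. n \<le> m \<and> m \<le> k \<longrightarrow> (\<forall>x\<in>mcarrier (D n). c k m (c m n x) = c k n x))"

definition mittag_leffler :: "(nat \<Rightarrow> 'h set) \<Rightarrow> (nat \<Rightarrow> nat \<Rightarrow> 'h \<Rightarrow> 'h) \<Rightarrow> bool" where
  "mittag_leffler H h \<longleftrightarrow>
     (\<forall>n. \<exists>m\<ge>n. \<forall>k\<ge>m. h n k ` H k = h n m ` H m)"

definition hom_invsys_ML :: "(nat \<Rightarrow> ('r::ring_1, 'c) rmod) \<Rightarrow> (nat \<Rightarrow> nat \<Rightarrow> 'c \<Rightarrow> 'c) \<Rightarrow> ('r, 'm) rmod \<Rightarrow> bool" where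
  "hom_invsys_ML D c T \<longleftrightarrow>
     mittag_leffler (\<lambda>n. rhom (D n) T) (\<lambda>n m u. restrict (u \<circ> c m n) (mcarrier (D n)))"

definition pure_mono :: "('r::ring_1, 'a) rmod \<Rightarrow> ('r, 'b) rmod \<Rightarrow> ('a \<Rightarrow> 'b) \<Rightarrow> bool" where
  "pure_mono A B f \<longleftrightarrow> f \<in> rhom A B \<and> inj_on f (mcarrier A) \<and>
     (\<forall>(m::nat) (n::nat) (r :: nat \<Rightarrow> nat \<Rightarrow> 'r) (a :: nat \<Rightarrow> 'a).
        (\<forall>i<m. a i \<in> mcarrier A) \<longrightarrow>
        (\<exists>y. (\<forall>j<n. y j \<in> mcarrier B) \<and>
             (\<forall>i<m. msum B (\<lambda>j. mact B (y j) (r i j)) n = f (a i))) \<longrightarrow>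
        (\<exists>x. (\<forall>j<n. x j \<in> mcarrier A) \<and>
             (\<forall>i<m. msum A (\<lambda>j. mact A (x j) (r i j)) n = a i)))"

text \<open>Pure-injectivity, tested on pure monomorphisms between modules whose elements
  live in the (arbitrary) types 'a and 'b.\<close>
definition pure_injective :: "'a itself \<Rightarrow> 'b itself \<Rightarrow> ('r::ring_1, 'x) rmod \<Rightarrow> bool" where
  "pure_injective _ _ X \<longleftrightarrow> right_module X \<and>
     (\<forall>(A :: ('r, 'a) rmod) (B :: ('r, 'b) rmod) f.
        right_module A \<and> right_module B \<and> pure_mono A B f \<longrightarrow>
        (\<forall>g\<in>rhom A X. \<exists>h\<in>rhom B X. \<forall>a\<in>mcarrier A. h (f a) = g a))"

definition dsum :: "'k set \<Rightarrow> ('r, 'm) rmod \<Rightarrow> ('r, 'k \<Rightarrow> 'm) rmod" where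
  "dsum I T = \<lparr> mcarrier = {u. u \<in> I \<rightarrow>\<^sub>E mcarrier T \<and> finite {i\<in>I. u i \<noteq> mzero T}},
                madd = (\<lambda>u v. restrict (\<lambda>i. madd T (u i) (v i)) I),
                mzero = restrict (\<lambda>i. mzero T) I,
                mact = (\<lambda>u r. restrict (\<lambda>i. mact T (u i) r) I) \<rparr>"

definition sigma_pure_injective :: "'k itself \<Rightarrow> 'a itself \<Rightarrow> 'b itself \<Rightarrow> ('r::ring_1, 'm) rmod \<Rightarrow> bool" where
  "sigma_pure_injective _ _ _ T \<longleftrightarrow>
     (\<forall>I :: 'k set. pure_injective TYPE('a) TYPE('b) (dsum I T))"

end

theory Submission
  imports Defs "HOL-Library.Function_Algebras"
begin

definition mneg :: "('r::ring_1, 'm) rmod \<Rightarrow> 'm \<Rightarrow> 'm" where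
  "mneg M x = (SOME y. y \<in> mcarrier M \<and> madd M x y = mzero M)"

lemma msum_cong: "(\<And>j. j < n \<Longrightarrow> f j = g j) \<Longrightarrow> msum M f n = msum M g n"
  by (induction n) auto

locale rm =
  fixes M :: "('r::ring_1, 'm) rmod"
  assumes rmod: "right_module M"
begin

lemma zero_closed[simp]: "mzero M \<in> mcarrier M"
  using rmod unfolding right_module_def by meson
lemma add_closed[simp]: "x \<in> mcarrier M \<Longrightarrow> y \<in> mcarrier M \<Longrightarrow> madd M x y \<in> mcarrier M"
  using rmod unfolding right_module_def by meson
lemma act_closed[simp]: "x \<in> mcarrier M \<Longrightarrow> mact M x r \<in> mcarrier M"
  using rmod unfolding right_module_def by meson
lemma add_assoc: "x \<in> mcarrier M \<Longrightarrow> y \<in> mcarrier M \<Longrightarrow> z \<in> mcarrier M \<Longrightarrow>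
   madd M (madd M x y) z = madd M x (madd M y z)"
  using rmod unfolding right_module_def by meson
lemma add_comm: "x \<in> mcarrier M \<Longrightarrow> y \<in> mcarrier M \<Longrightarrow> madd M x y = madd M y x"
  using rmod unfolding right_module_def by meson
lemma add_zero_l[simp]: "x \<in> mcarrier M \<Longrightarrow> madd M (mzero M) x = x"
  using rmod unfolding right_module_def by meson
lemma add_zero_r[simp]: "x \<in> mcarrier M \<Longrightarrow> madd M x (mzero M) = x"
  using add_comm add_zero_l zero_closed by metis
lemma ex_neg: "x \<in> mcarrier M \<Longrightarrow> \<exists>y\<in>mcarrier M. madd M x y = mzero M"
  using rmod unfolding right_module_def by meson
lemma act_add: "x \<in> mcarrier M \<Longrightarrow> y \<in> mcarrier M \<Longrightarrow>
   mact M (madd M x y) r = madd M (mact M x r) (mact M y r)"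
  using rmod unfolding right_module_def by meson
lemma act_radd: "x \<in> mcarrier M \<Longrightarrow> mact M x (r + s) = madd M (mact M x r) (mact M x s)"
  using rmod unfolding right_module_def by meson
lemma act_mult: "x \<in> mcarrier M \<Longrightarrow> mact M x (r * s) = mact M (mact M x r) s"
  using rmod unfolding right_module_def by meson
lemma act_one[simp]: "x \<in> mcarrier M \<Longrightarrow> mact M x 1 = x"
  using rmod unfolding right_module_def by meson

lemma neg_closed[simp]: "x \<in> mcarrier M \<Longrightarrow> mneg M x \<in> mcarrier M"
  and add_neg_r[simp]: "x \<in> mcarrier M \<Longrightarrow> madd M x (mneg M x) = mzero M"
  using someI_ex[OF ex_neg[unfolded Bex_def]] unfolding mneg_def by blast+
lemma add_neg_l[simp]: "x \<in> mcarrier M \<Longrightarrow> madd M (mneg M x) x = mzero M"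
  using add_comm add_neg_r neg_closed by metis

lemma add_left_cancel:
  assumes "x \<in> mcarrier M" "y \<in> mcarrier M" "z \<in> mcarrier M" "madd M x y = madd M x z"
  shows "y = z"
proof -
  have "madd M (mneg M x) (madd M x y) = madd M (mneg M x) (madd M x z)" using assms by simp
  thus ?thesis using assms add_assoc[of "mneg M x" x y] add_assoc[of "mneg M x" x z] by simp
qed

lemma neg_unique: "x \<in> mcarrier M \<Longrightarrow> y \<in> mcarrier M \<Longrightarrow> madd M x y = mzero M \<Longrightarrow> y = mneg M x"
  using add_left_cancel[of x y "mneg M x"] by simp

lemma add_eq_zero_iff: "x \<in> mcarrier M \<Longrightarrow> y \<in> mcarrier M \<Longrightarrow>
   (madd M x (mneg M y) = mzero M) = (x = y)"
  by (metis add_neg_r neg_closed neg_unique add_comm)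

lemma act_0[simp]: "x \<in> mcarrier M \<Longrightarrow> mact M x 0 = mzero M"
proof -
  assume x: "x \<in> mcarrier M"
  have "madd M (mact M x 0) (mact M x 0) = madd M (mact M x 0) (mzero M)"
    using act_radd[OF x, of 0 0] x by simp
  thus ?thesis using add_left_cancel[of "mact M x 0" "mact M x 0" "mzero M"] x by simp
qed

lemma act_zero[simp]: "mact M (mzero M) r = mzero M"
proof -
  have "madd M (mact M (mzero M) r) (mact M (mzero M) r) = madd M (mact M (mzero M) r) (mzero M)"
    using act_add[of "mzero M" "mzero M" r] by simp
  thus ?thesis using add_left_cancel[of "mact M (mzero M) r" "mact M (mzero M) r" "mzero M"] by simp
qed

lemma act_uminus: "x \<in> mcarrier M \<Longrightarrow> mact M x (- r) = mneg M (mact M x r)"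
  by (rule neg_unique) (auto simp: act_radd[symmetric])

lemma neg_zero[simp]: "mneg M (mzero M) = mzero M"
  by (metis add_zero_l neg_closed add_neg_r zero_closed)

lemma neg_neg[simp]: "x \<in> mcarrier M \<Longrightarrow> mneg M (mneg M x) = x"
  by (metis add_neg_l neg_closed neg_unique)

lemma neg_add: "x \<in> mcarrier M \<Longrightarrow> y \<in> mcarrier M \<Longrightarrow>
   mneg M (madd M x y) = madd M (mneg M x) (mneg M y)"
  by (metis act_add act_uminus act_one add_closed)

lemma act_neg: "x \<in> mcarrier M \<Longrightarrow> mact M (mneg M x) r = mneg M (mact M x r)"
  by (metis act_mult act_one act_uminus mult_minus_left mult_1_left)

lemma msum_closed[simp]: "(\<And>j. j < n \<Longrightarrow> f j \<in> mcarrier M) \<Longrightarrow> msum M f n \<in> mcarrier M"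
  by (induction n) auto

lemma msum_add:
  "(\<And>j. j < n \<Longrightarrow> f j \<in> mcarrier M) \<Longrightarrow> (\<And>j. j < n \<Longrightarrow> g j \<in> mcarrier M) \<Longrightarrow>
   msum M (\<lambda>j. madd M (f j) (g j)) n = madd M (msum M f n) (msum M g n)"
proof (induction n)
  case 0 then show ?case by simp
next
  case (Suc n)
  have IH: "msum M (\<lambda>j. madd M (f j) (g j)) n = madd M (msum M f n) (msum M g n)"
    using Suc by auto
  have c: "msum M f n \<in> mcarrier M" "msum M g n \<in> mcarrier M" "f n \<in> mcarrier M" "g n \<in> mcarrier M"
    using Suc.prems by auto
  show ?case using c by (simp add: IH add_assoc) (metis add_assoc add_comm)
qed

lemma msum_zero: "(\<And>j. j < n \<Longrightarrow> f j = mzero M) \<Longrightarrow> msum M f n = mzero M"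
  by (induction n) auto

lemma msum_act:
  "(\<And>j. j < n \<Longrightarrow> f j \<in> mcarrier M) \<Longrightarrow> mact M (msum M f n) r = msum M (\<lambda>j. mact M (f j) r) n"
  by (induction n) (auto simp: act_add)

lemma msum_neg:
  "(\<And>j. j < n \<Longrightarrow> f j \<in> mcarrier M) \<Longrightarrow> mneg M (msum M f n) = msum M (\<lambda>j. mneg M (f j)) n"
  by (induction n) (auto simp: neg_add)

lemma msum_split:
  "(\<And>j. j < a + b \<Longrightarrow> f j \<in> mcarrier M) \<Longrightarrow>
   msum M f (a + b) = madd M (msum M f a) (msum M (\<lambda>j. f (a + j)) b)"
proof (induction b)
  case 0 then show ?case by simp
next
  case (Suc b)
  then show ?case by (simp add: add_assoc)
qed

lemma msum_shift:
  "(\<And>j. j < Suc n \<Longrightarrow> f j \<in> mcarrier M) \<Longrightarrow>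
   msum M f (Suc n) = madd M (f 0) (msum M (\<lambda>j. f (Suc j)) n)"
  using msum_split[of 1 n f] by simp

lemma msum_single:
  assumes "k < n" "f k \<in> mcarrier M" "\<And>j. j < n \<Longrightarrow> j \<noteq> k \<Longrightarrow> f j = mzero M"
  shows "msum M f n = f k"
  using assms
proof (induction n)
  case 0 then show ?case by simp
next
  case (Suc n)
  show ?case
  proof (cases "k = n")
    case True
    have "msum M f n = mzero M" using Suc.prems True by (intro msum_zero) auto
    then show ?thesis using True Suc.prems by simp
  next
    case False
    then have "k < n" using Suc.prems by simp
    then show ?thesis using Suc False by simp
  qed
qed

lemma act_rsum:
  "x \<in> mcarrier M \<Longrightarrow> mact M x (\<Sum>i<m. r i) = msum M (\<lambda>i. mact M x (r i)) m"
  by (induction m) (auto simp: act_radd)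

lemma msum_swap:
  "(\<And>i j. i < n \<Longrightarrow> j < m \<Longrightarrow> f i j \<in> mcarrier M) \<Longrightarrow>
   msum M (\<lambda>i. msum M (\<lambda>j. f i j) m) n = msum M (\<lambda>j. msum M (\<lambda>i. f i j) n) m"
proof (induction n)
  case 0 then show ?case by (simp add: msum_zero)
next
  case (Suc n)
  have "msum M (\<lambda>j. msum M (\<lambda>i. f i j) (Suc n)) m =
        madd M (msum M (\<lambda>j. msum M (\<lambda>i. f i j) n) m) (msum M (\<lambda>j. f n j) m)"
    using Suc.prems by (simp add: msum_add)
  then show ?case using Suc by simp
qed

end

lemma rhom_closed: "h \<in> rhom M N \<Longrightarrow> x \<in> mcarrier M \<Longrightarrow> h x \<in> mcarrier N"
  unfolding rhom_def by auto
lemma rhom_add: "h \<in> rhom M N \<Longrightarrow> x \<in> mcarrier M \<Longrightarrow> y \<in> mcarrier M \<Longrightarrow>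
  h (madd M x y) = madd N (h x) (h y)"
  unfolding rhom_def by auto
lemma rhom_act: "h \<in> rhom M N \<Longrightarrow> x \<in> mcarrier M \<Longrightarrow> h (mact M x r) = mact N (h x) r"
  unfolding rhom_def by auto
lemma rhom_ext: "h \<in> rhom M N \<Longrightarrow> x \<notin> mcarrier M \<Longrightarrow> h x = undefined"
  unfolding rhom_def by auto

lemma rhom_zero: "right_module M \<Longrightarrow> right_module N \<Longrightarrow> h \<in> rhom M N \<Longrightarrow> h (mzero M) = mzero N"
  using rhom_act[of h M N "mzero M" 0] rm.act_0[of M] rm.act_0[of N] rm.zero_closed[of M]
    rhom_closed[of h M N] unfolding rm_def by metis

lemma rhom_msum: "right_module M \<Longrightarrow> right_module N \<Longrightarrow> h \<in> rhom M N \<Longrightarrow>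
  (\<And>j. j < n \<Longrightarrow> f j \<in> mcarrier M) \<Longrightarrow> h (msum M f n) = msum N (\<lambda>j. h (f j)) n"
  by (induction n) (auto simp: rhom_zero rhom_add rm.msum_closed rm_def)

lemma rhom_neg: "right_module M \<Longrightarrow> right_module N \<Longrightarrow> h \<in> rhom M N \<Longrightarrow> x \<in> mcarrier M \<Longrightarrow>
  h (mneg M x) = mneg N (h x)"
  by (metis rhom_act rm.act_one rm.act_uminus rm_def rhom_closed)

lemma rhom_comp: "right_module M1 \<Longrightarrow> u \<in> rhom M1 M2 \<Longrightarrow> v \<in> rhom M2 M3 \<Longrightarrow>
   restrict (v \<circ> u) (mcarrier M1) \<in> rhom M1 M3"
  using rm.add_closed[of M1] rm.act_closed[of M1] unfolding rhom_def rm_def by (auto simp: PiE_def Pi_def)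

lemma rhom_id: "right_module M \<Longrightarrow> restrict id (mcarrier M) \<in> rhom M M"
  unfolding rhom_def by (auto simp: rm.add_closed rm.act_closed rm_def)


type_synonym 'r fm = "nat \<times> nat \<times> (nat \<Rightarrow> nat \<Rightarrow> 'r)"

definition sol :: "('r::ring_1, 'm) rmod \<Rightarrow> 'r fm \<Rightarrow> (nat \<Rightarrow> 'm) \<Rightarrow> bool" where
  "sol M \<phi> w \<longleftrightarrow> (case \<phi> of (N, m, E) \<Rightarrow> (\<forall>j<N. w j \<in> mcarrier M) \<and>
      (\<forall>i<m. msum M (\<lambda>j. mact M (w j) (E i j)) N = mzero M))"

definition pp1 :: "('r::ring_1, 'm) rmod \<Rightarrow> 'r fm \<Rightarrow> 'm set" where
  "pp1 M \<phi> = {x \<in> mcarrier M. \<exists>w. sol M \<phi> w \<and> w 0 = x}"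

lemma sol_def2: "sol M (N, m, E) w \<longleftrightarrow> (\<forall>j<N. w j \<in> mcarrier M) \<and>
      (\<forall>i<m. msum M (\<lambda>j. mact M (w j) (E i j)) N = mzero M)"
  by (simp add: sol_def)

lemma sol_cong: "(\<And>j. j < fst \<phi> \<Longrightarrow> w j = w' j) \<Longrightarrow> sol M \<phi> w = sol M \<phi> w'"
proof -
  assume a: "\<And>j. j < fst \<phi> \<Longrightarrow> w j = w' j"
  obtain N m E where p: "\<phi> = (N, m, E)" by (cases \<phi>) auto
  have "\<And>i. msum M (\<lambda>j. mact M (w j) (E i j)) N = msum M (\<lambda>j. mact M (w' j) (E i j)) N"
    using a p by (intro msum_cong) auto
  then show ?thesis using a p by (auto simp: sol_def2)
qed

lemma sol_hom:
  assumes "right_module M" "right_module M'" "h \<in> rhom M M'" "sol M \<phi> w"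
  shows "sol M' \<phi> (\<lambda>j. h (w j))"
proof -
  obtain N m E where p: "\<phi> = (N, m, E)" by (cases \<phi>) auto
  have w: "\<And>j. j < N \<Longrightarrow> w j \<in> mcarrier M" and e: "\<And>i. i < m \<Longrightarrow> msum M (\<lambda>j. mact M (w j) (E i j)) N = mzero M"
    using assms(4) p by (auto simp: sol_def2)
  have "\<And>i. i < m \<Longrightarrow> msum M' (\<lambda>j. mact M' (h (w j)) (E i j)) N = mzero M'"
  proof -
    fix i assume i: "i < m"
    have "h (msum M (\<lambda>j. mact M (w j) (E i j)) N) = msum M' (\<lambda>j. h (mact M (w j) (E i j))) N"
      using assms w by (intro rhom_msum) (auto simp: rm.act_closed rm_def)
    also have "\<dots> = msum M' (\<lambda>j. mact M' (h (w j)) (E i j)) N"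
      using assms w by (intro msum_cong) (auto simp: rhom_act rm_def)
    finally show "?thesis i" using e[OF i] assms rhom_zero by metis
  qed
  then show ?thesis using p w by (auto simp: sol_def2 intro: rhom_closed[OF assms(3)])
qed

lemma pp1_hom:
  assumes "right_module M" "right_module M'" "h \<in> rhom M M'" "x \<in> pp1 M \<phi>"
  shows "h x \<in> pp1 M' \<phi>"
proof -
  obtain w where "sol M \<phi> w" "w 0 = x" "x \<in> mcarrier M" using assms(4) by (auto simp: pp1_def)
  then show ?thesis using sol_hom[OF assms(1-3)] rhom_closed[OF assms(3)]
    unfolding pp1_def by blast
qed

lemma sol_carrier: "sol M \<phi> w \<Longrightarrow> j < fst \<phi> \<Longrightarrow> w j \<in> mcarrier M"
  by (cases \<phi>) (auto simp: sol_def2)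

context rm begin

lemma sol_zero: "sol M \<phi> (\<lambda>j. mzero M)"
  by (cases \<phi>) (auto simp: sol_def2 intro!: msum_zero)

lemma sol_add:
  assumes "sol M \<phi> w1" "sol M \<phi> w2"
  shows "sol M \<phi> (\<lambda>j. madd M (w1 j) (w2 j))"
proof -
  obtain N m E where p: "\<phi> = (N, m, E)" by (cases \<phi>) auto
  have c: "\<And>j. j < N \<Longrightarrow> w1 j \<in> mcarrier M" "\<And>j. j < N \<Longrightarrow> w2 j \<in> mcarrier M"
    using assms p by (auto simp: sol_def2)
  have "\<And>i. i < m \<Longrightarrow> msum M (\<lambda>j. mact M (madd M (w1 j) (w2 j)) (E i j)) N = mzero M"
  proof -
    fix i assume i: "i < m"
    have "msum M (\<lambda>j. mact M (madd M (w1 j) (w2 j)) (E i j)) N =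
          msum M (\<lambda>j. madd M (mact M (w1 j) (E i j)) (mact M (w2 j) (E i j))) N"
      using c by (intro msum_cong) (auto simp: act_add)
    also have "\<dots> = madd M (msum M (\<lambda>j. mact M (w1 j) (E i j)) N) (msum M (\<lambda>j. mact M (w2 j) (E i j)) N)"
      using c by (intro msum_add) auto
    also have "\<dots> = mzero M" using assms p i by (simp add: sol_def2)
    finally show "?thesis i" .
  qed
  then show ?thesis using c p by (auto simp: sol_def2)
qed

lemma sol_neg:
  assumes "sol M \<phi> w"
  shows "sol M \<phi> (\<lambda>j. mneg M (w j))"
proof -
  obtain N m E where p: "\<phi> = (N, m, E)" by (cases \<phi>) auto
  have c: "\<And>j. j < N \<Longrightarrow> w j \<in> mcarrier M"
    using assms p by (auto simp: sol_def2)
  have "\<And>i. i < m \<Longrightarrow> msum M (\<lambda>j. mact M (mneg M (w j)) (E i j)) N = mzero M"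
  proof -
    fix i assume i: "i < m"
    have "msum M (\<lambda>j. mact M (mneg M (w j)) (E i j)) N =
          msum M (\<lambda>j. mneg M (mact M (w j) (E i j))) N"
      using c by (intro msum_cong) (auto simp: act_neg)
    also have "\<dots> = mneg M (msum M (\<lambda>j. mact M (w j) (E i j)) N)"
      using c by (intro msum_neg[symmetric]) auto
    also have "\<dots> = mzero M" using assms p i by (simp add: sol_def2)
    finally show "?thesis i" .
  qed
  then show ?thesis using c p by (auto simp: sol_def2)
qed

end

definition pconj :: "'r::ring_1 fm \<Rightarrow> 'r fm \<Rightarrow> 'r fm" where
  "pconj \<phi>1 \<phi>2 = (case \<phi>1 of (N1, m1, E1) \<Rightarrow> case \<phi>2 of (N2, m2, E2) \<Rightarrow>
     (N1 + N2, m1 + m2 + 1, \<lambda>i j.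
        if i < m1 then (if j < N1 then E1 i j else 0)
        else if i < m1 + m2 then (if N1 \<le> j then E2 (i - m1) (j - N1) else 0)
        else (if j = 0 then 1 else if j = N1 then -1 else 0)))"

lemma (in rm) sol_pconj:
  assumes "\<phi>1 = (N1, m1, E1)" "\<phi>2 = (N2, m2, E2)" "0 < N1" "0 < N2"
  shows "sol M (pconj \<phi>1 \<phi>2) w \<longleftrightarrow> sol M \<phi>1 w \<and> sol M \<phi>2 (\<lambda>j. w (N1 + j)) \<and> w 0 = w N1"
proof -
  define E where "E = (\<lambda>i j.
        if i < m1 then (if j < N1 then E1 i j else 0)
        else if i < m1 + m2 then (if N1 \<le> j then E2 (i - m1) (j - N1) else 0)
        else (if j = 0 then 1 else if j = N1 then -1 else 0))"
  have cj: "pconj \<phi>1 \<phi>2 = (N1 + N2, m1 + m2 + 1, E)" using assms by (simp add: pconj_def E_def)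
  show ?thesis
  proof (cases "\<forall>j<N1 + N2. w j \<in> mcarrier M")
    case False
    then obtain j where "j < N1 + N2" "w j \<notin> mcarrier M" by auto
    then show ?thesis using assms cj
      by (cases "j < N1") (auto simp: sol_def2 dest: spec[of _ "j - N1"])
  next
    case True
    have sp: "\<And>i. msum M (\<lambda>j. mact M (w j) (E i j)) (N1 + N2) =
       madd M (msum M (\<lambda>j. mact M (w j) (E i j)) N1) (msum M (\<lambda>j. mact M (w (N1 + j)) (E i (N1 + j))) N2)"
      using True by (intro msum_split) auto
    have r1: "\<And>i. i < m1 \<Longrightarrow> msum M (\<lambda>j. mact M (w j) (E i j)) (N1 + N2) =
       msum M (\<lambda>j. mact M (w j) (E1 i j)) N1"
    proof -
      fix i assume i: "i < m1"
      have "msum M (\<lambda>j. mact M (w (N1 + j)) (E i (N1 + j))) N2 = mzero M"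
        using True i by (intro msum_zero) (auto simp: E_def)
      moreover have "msum M (\<lambda>j. mact M (w j) (E i j)) N1 = msum M (\<lambda>j. mact M (w j) (E1 i j)) N1"
        using i by (intro msum_cong) (auto simp: E_def)
      ultimately show "?thesis i" using sp True by simp
    qed
    have r2: "\<And>i. i < m2 \<Longrightarrow> msum M (\<lambda>j. mact M (w j) (E (m1 + i) j)) (N1 + N2) =
       msum M (\<lambda>j. mact M (w (N1 + j)) (E2 i j)) N2"
    proof -
      fix i assume i: "i < m2"
      have "msum M (\<lambda>j. mact M (w j) (E (m1 + i) j)) N1 = mzero M"
        using True i by (intro msum_zero) (auto simp: E_def)
      moreover have "msum M (\<lambda>j. mact M (w (N1 + j)) (E (m1 + i) (N1 + j))) N2 = msum M (\<lambda>j. mact M (w (N1 + j)) (E2 i j)) N2"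
        using i by (intro msum_cong) (auto simp: E_def)
      ultimately show "?thesis i" using sp[of "m1 + i"] True by simp
    qed
    have r3: "msum M (\<lambda>j. mact M (w j) (E (m1 + m2) j)) (N1 + N2) = madd M (w 0) (mneg M (w N1))"
    proof -
      have "msum M (\<lambda>j. mact M (w j) (E (m1 + m2) j)) N1 = w 0"
        using True assms by (subst msum_single[of 0]) (auto simp: E_def)
      moreover have "msum M (\<lambda>j. mact M (w (N1 + j)) (E (m1 + m2) (N1 + j))) N2 = mneg M (w N1)"
        using True assms by (subst msum_single[of 0]) (auto simp: E_def act_uminus)
      ultimately show ?thesis using sp by simp
    qed
    have eq: "(madd M (w 0) (mneg M (w N1)) = mzero M) = (w 0 = w N1)"
      using True assms by (intro add_eq_zero_iff) auto
    have "(\<forall>i<m1 + m2 + 1. msum M (\<lambda>j. mact M (w j) (E i j)) (N1 + N2) = mzero M) \<longleftrightarrow>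
      (\<forall>i<m1. msum M (\<lambda>j. mact M (w j) (E1 i j)) N1 = mzero M) \<and>
      (\<forall>i<m2. msum M (\<lambda>j. mact M (w (N1 + j)) (E2 i j)) N2 = mzero M) \<and>
      w 0 = w N1" (is "?L = ?R")
    proof
      assume L: ?L
      show ?R
      proof (intro conjI allI impI)
        fix i assume "i < m1" then show "msum M (\<lambda>j. mact M (w j) (E1 i j)) N1 = mzero M"
          using L r1 by auto
      next
        fix i assume "i < m2" then show "msum M (\<lambda>j. mact M (w (N1 + j)) (E2 i j)) N2 = mzero M"
          using L[rule_format, of "m1 + i"] r2 by auto
      next
        show "w 0 = w N1" using L[rule_format, of "m1 + m2"] r3 eq by auto
      qed
    next
      assume R: ?R
      show ?L
      proof (intro allI impI)
        fix i assume i: "i < m1 + m2 + 1"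
        consider "i < m1" | "m1 \<le> i" "i < m1 + m2" | "i = m1 + m2" using i by linarith
        then show "msum M (\<lambda>j. mact M (w j) (E i j)) (N1 + N2) = mzero M"
        proof cases
          case 1 then show ?thesis using R r1 by auto
        next
          case 2 then show ?thesis using R r2[of "i - m1"] by auto
        next
          case 3 then show ?thesis using R r3 eq by auto
        qed
      qed
    qed
    then show ?thesis using True assms cj by (auto simp: sol_def2)
  qed
qed

lemma fst_pconj: "fst (pconj \<phi>1 \<phi>2) = fst \<phi>1 + fst \<phi>2"
  by (cases \<phi>1; cases \<phi>2) (simp add: pconj_def)

lemma (in rm) pp1_pconj:
  assumes "0 < fst \<phi>1" "0 < fst \<phi>2"
  shows "pp1 M (pconj \<phi>1 \<phi>2) = pp1 M \<phi>1 \<inter> pp1 M \<phi>2"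
proof -
  obtain N1 m1 E1 where p1: "\<phi>1 = (N1, m1, E1)" by (cases \<phi>1) auto
  obtain N2 m2 E2 where p2: "\<phi>2 = (N2, m2, E2)" by (cases \<phi>2) auto
  note sc = sol_pconj[OF p1 p2]
  show ?thesis
  proof
    show "pp1 M (pconj \<phi>1 \<phi>2) \<subseteq> pp1 M \<phi>1 \<inter> pp1 M \<phi>2"
      using sc assms p1 p2 unfolding pp1_def by fastforce
  next
    show "pp1 M \<phi>1 \<inter> pp1 M \<phi>2 \<subseteq> pp1 M (pconj \<phi>1 \<phi>2)"
    proof
      fix x assume "x \<in> pp1 M \<phi>1 \<inter> pp1 M \<phi>2"
      then obtain w1 w2 where w: "sol M \<phi>1 w1" "w1 0 = x" "sol M \<phi>2 w2" "w2 0 = x" "x \<in> mcarrier M"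
        unfolding pp1_def by auto
      define w where "w = (\<lambda>j. if j < N1 then w1 j else w2 (j - N1))"
      have "sol M \<phi>1 w" using w(1) p1 by (subst sol_cong[of _ w w1]) (auto simp: w_def)
      moreover have "sol M \<phi>2 (\<lambda>j. w (N1 + j))" using w(3) by (subst sol_cong[of _ _ w2]) (auto simp: w_def)
      ultimately have "sol M (pconj \<phi>1 \<phi>2) w" using sc assms p1 p2 w by (auto simp: w_def)
      moreover have "w 0 = x" using assms p1 w by (simp add: w_def)
      ultimately show "x \<in> pp1 M (pconj \<phi>1 \<phi>2)" using w(5) unfolding pp1_def by auto
    qed
  qed
qed


lemma sum_fun_apply: "(\<Sum>j<n. f j) x = (\<Sum>j<n. f j x)" for f :: "nat \<Rightarrow> nat \<Rightarrow> 'r::ring_1"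
  by (induction n) auto

definition Vs :: "nat \<Rightarrow> (nat \<Rightarrow> 'r::ring_1) set" where
  "Vs N = {v. \<forall>j\<ge>N. v j = 0}"

definition Ks :: "'r::ring_1 fm \<Rightarrow> (nat \<Rightarrow> 'r) set" where
  "Ks \<phi> = (case \<phi> of (N, m, E) \<Rightarrow> {v. \<exists>s. v = (\<lambda>j. if j < N then (\<Sum>i<m. E i j * s i) else 0)})"

definition cls :: "'r::ring_1 fm \<Rightarrow> (nat \<Rightarrow> 'r) \<Rightarrow> (nat \<Rightarrow> 'r) set" where
  "cls \<phi> v = {v' \<in> Vs (fst \<phi>). v' - v \<in> Ks \<phi>}"

definition Fq :: "'r::ring_1 fm \<Rightarrow> ('r, (nat \<Rightarrow> 'r) set) rmod" where
  "Fq \<phi> = \<lparr> mcarrier = cls \<phi> ` Vs (fst \<phi>),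
     madd = (\<lambda>U W. {z \<in> Vs (fst \<phi>). \<exists>u\<in>U. \<exists>w\<in>W. z - (u + w) \<in> Ks \<phi>}),
     mzero = Ks \<phi>,
     mact = (\<lambda>U r. {z \<in> Vs (fst \<phi>). \<exists>u\<in>U. z - (\<lambda>j. u j * r) \<in> Ks \<phi>}) \<rparr>"

definition ev :: "('r::ring_1, 'm) rmod \<Rightarrow> nat \<Rightarrow> (nat \<Rightarrow> 'm) \<Rightarrow> (nat \<Rightarrow> 'r) \<Rightarrow> 'm" where
  "ev M N w u = msum M (\<lambda>j. mact M (w j) (u j)) N"

definition ee :: "nat \<Rightarrow> nat \<Rightarrow> 'r::ring_1" where
  "ee i = (\<lambda>j. if j = i then 1 else 0)"

context
  fixes \<phi> :: "'r::ring_1 fm" and N m E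
  assumes p: "\<phi> = (N, m, E)"
begin

lemma fstp: "fst \<phi> = N" using p by simp

lemma Ks_alt: "Ks \<phi> = {v. \<exists>s. v = (\<lambda>j. if j < N then (\<Sum>i<m. E i j * s i) else 0)}"
  using p by (simp add: Ks_def)

lemma Ks_V: "v \<in> Ks \<phi> \<Longrightarrow> v \<in> Vs N"
  by (auto simp: Ks_alt Vs_def)

lemma Ks_0: "0 \<in> Ks \<phi>"
  unfolding Ks_alt by (rule CollectI, rule exI[of _ "\<lambda>_. 0"]) (auto simp: fun_eq_iff)

lemma Ks_add: "u \<in> Ks \<phi> \<Longrightarrow> v \<in> Ks \<phi> \<Longrightarrow> u + v \<in> Ks \<phi>"
proof -
  assume "u \<in> Ks \<phi>" "v \<in> Ks \<phi>"
  then obtain s t where st: "u = (\<lambda>j. if j < N then (\<Sum>i<m. E i j * s i) else 0)"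
    "v = (\<lambda>j. if j < N then (\<Sum>i<m. E i j * t i) else 0)" by (auto simp: Ks_alt)
  show ?thesis unfolding Ks_alt
    by (rule CollectI, rule exI[of _ "\<lambda>i. s i + t i"]) (auto simp: st fun_eq_iff distrib_left sum.distrib)
qed

lemma Ks_mult: "u \<in> Ks \<phi> \<Longrightarrow> (\<lambda>j. u j * r) \<in> Ks \<phi>"
proof -
  assume "u \<in> Ks \<phi>"
  then obtain s where st: "u = (\<lambda>j. if j < N then (\<Sum>i<m. E i j * s i) else 0)"
    by (auto simp: Ks_alt)
  show ?thesis unfolding Ks_alt
    by (rule CollectI, rule exI[of _ "\<lambda>i. s i * r"]) (auto simp: st fun_eq_iff sum_distrib_right mult.assoc)
qed

lemma Ks_neg: "u \<in> Ks \<phi> \<Longrightarrow> - u \<in> Ks \<phi>"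
  using Ks_mult[of u "-1"] by (simp add: fun_Compl_def)

lemma Ks_diff: "u \<in> Ks \<phi> \<Longrightarrow> v \<in> Ks \<phi> \<Longrightarrow> u - v \<in> Ks \<phi>"
  using Ks_add[of u "- v"] Ks_neg[of v] by simp

lemma Vs_add: "u \<in> Vs N \<Longrightarrow> v \<in> Vs N \<Longrightarrow> u + v \<in> Vs N"
  by (auto simp: Vs_def)
lemma Vs_mult: "u \<in> Vs N \<Longrightarrow> (\<lambda>j. u j * r) \<in> Vs N"
  by (auto simp: Vs_def)
lemma Vs_neg: "u \<in> Vs N \<Longrightarrow> - u \<in> Vs N"
  by (auto simp: Vs_def)
lemma Vs_0: "0 \<in> Vs N"
  by (auto simp: Vs_def)

lemma cls_alt: "cls \<phi> v = {v' \<in> Vs N. v' - v \<in> Ks \<phi>}"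
  using p by (simp add: cls_def)

lemma cls_self: "v \<in> Vs N \<Longrightarrow> v \<in> cls \<phi> v"
  using Ks_0 by (simp add: cls_alt)

lemma cls_eq: "u \<in> Vs N \<Longrightarrow> v \<in> Vs N \<Longrightarrow> cls \<phi> u = cls \<phi> v \<longleftrightarrow> u - v \<in> Ks \<phi>"
proof
  assume u: "u \<in> Vs N" and v: "v \<in> Vs N"
  { assume "cls \<phi> u = cls \<phi> v"
    then have "u \<in> cls \<phi> v" using cls_self[OF u] by simp
    then show "u - v \<in> Ks \<phi>" by (simp add: cls_alt) }
  { assume d: "u - v \<in> Ks \<phi>"
    show "cls \<phi> u = cls \<phi> v"
    proof (auto simp: cls_alt)
      fix x assume "x - u \<in> Ks \<phi>" then have "(x - u) + (u - v) \<in> Ks \<phi>" using Ks_add[OF _ d] by blast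
      then show "x - v \<in> Ks \<phi>" by (simp add: algebra_simps)
    next
      fix x assume "x - v \<in> Ks \<phi>" then have "(x - v) - (u - v) \<in> Ks \<phi>" using Ks_diff[OF _ d] by blast
      then show "x - u \<in> Ks \<phi>" by (simp add: algebra_simps)
    qed }
qed

lemma cls_0: "cls \<phi> 0 = Ks \<phi>"
  using Ks_V by (auto simp: cls_alt)

lemma Fq_carrier: "mcarrier (Fq \<phi>) = cls \<phi> ` Vs N"
  using p by (simp add: Fq_def)
lemma Fq_zero: "mzero (Fq \<phi>) = Ks \<phi>"
  using p by (simp add: Fq_def)

lemma Fq_add: "u \<in> Vs N \<Longrightarrow> v \<in> Vs N \<Longrightarrow> madd (Fq \<phi>) (cls \<phi> u) (cls \<phi> v) = cls \<phi> (u + v)"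
proof -
  assume u: "u \<in> Vs N" and v: "v \<in> Vs N"
  have key: "z - (u + v) \<in> Ks \<phi>" if "u' - u \<in> Ks \<phi>" "v' - v \<in> Ks \<phi>" "z - (u' + v') \<in> Ks \<phi>" for z u' v'
  proof -
    have "(u' - u) + (v' - v) \<in> Ks \<phi>" using Ks_add[OF that(1,2)] .
    then have "(z - (u' + v')) + ((u' - u) + (v' - v)) \<in> Ks \<phi>" using Ks_add[OF that(3)] by blast
    then show ?thesis by (simp add: algebra_simps)
  qed
  show ?thesis
  proof (intro set_eqI iffI)
    fix z assume "z \<in> madd (Fq \<phi>) (cls \<phi> u) (cls \<phi> v)"
    then show "z \<in> cls \<phi> (u + v)" using key by (auto simp: Fq_def cls_alt fstp)
  next
    fix z assume z: "z \<in> cls \<phi> (u + v)"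
    have "z \<in> Vs N \<and> (\<exists>u'\<in>cls \<phi> u. \<exists>w\<in>cls \<phi> v. z - (u' + w) \<in> Ks \<phi>)"
      by (intro conjI bexI[of _ u] bexI[of _ v]) (use z cls_self[OF u] cls_self[OF v] in \<open>auto simp: cls_alt\<close>)
    then show "z \<in> madd (Fq \<phi>) (cls \<phi> u) (cls \<phi> v)"
      by (simp add: Fq_def fstp)
  qed
qed

lemma Fq_act: "u \<in> Vs N \<Longrightarrow> mact (Fq \<phi>) (cls \<phi> u) r = cls \<phi> (\<lambda>j. u j * r)"
proof -
  assume u: "u \<in> Vs N"
  have key: "z - (\<lambda>j. u j * r) \<in> Ks \<phi>" if "u' - u \<in> Ks \<phi>" "z - (\<lambda>j. u' j * r) \<in> Ks \<phi>" for z u'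
  proof -
    have d: "(\<lambda>j. u' j * r) - (\<lambda>j. u j * r) \<in> Ks \<phi>" using Ks_mult[OF that(1), of r]
      by (simp add: algebra_simps fun_diff_def)
    have "(z - (\<lambda>j. u' j * r)) + ((\<lambda>j. u' j * r) - (\<lambda>j. u j * r)) \<in> Ks \<phi>" using Ks_add[OF that(2) d] .
    then show ?thesis by (simp add: algebra_simps)
  qed
  show ?thesis
  proof (intro set_eqI iffI)
    fix z assume "z \<in> mact (Fq \<phi>) (cls \<phi> u) r"
    then show "z \<in> cls \<phi> (\<lambda>j. u j * r)" using key by (auto simp: Fq_def cls_alt fstp)
  next
    fix z assume z: "z \<in> cls \<phi> (\<lambda>j. u j * r)"
    then show "z \<in> mact (Fq \<phi>) (cls \<phi> u) r"
      using cls_self[OF u] by (auto simp: Fq_def cls_alt fstp)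
  qed
qed

lemma Fq_module: "right_module (Fq \<phi>)"
proof -
  have C: "mcarrier (Fq \<phi>) = cls \<phi> ` Vs N" by (rule Fq_carrier)
  have Z: "mzero (Fq \<phi>) = cls \<phi> 0" by (simp add: Fq_zero cls_0)
  show ?thesis unfolding right_module_def C Z
  proof (intro conjI ballI allI)
    show "cls \<phi> 0 \<in> cls \<phi> ` Vs N" using Vs_0 by blast
  next
    fix x y assume "x \<in> cls \<phi> ` Vs N" "y \<in> cls \<phi> ` Vs N"
    then show "madd (Fq \<phi>) x y \<in> cls \<phi> ` Vs N" by (auto simp: Fq_add Vs_add)
  next
    fix x r assume "x \<in> cls \<phi> ` Vs N"
    then show "mact (Fq \<phi>) x r \<in> cls \<phi> ` Vs N" by (auto simp: Fq_act Vs_mult)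
  next
    fix x y z assume "x \<in> cls \<phi> ` Vs N" "y \<in> cls \<phi> ` Vs N" "z \<in> cls \<phi> ` Vs N"
    then show "madd (Fq \<phi>) (madd (Fq \<phi>) x y) z = madd (Fq \<phi>) x (madd (Fq \<phi>) y z)"
      by (auto simp: Fq_add Vs_add add.assoc)
  next
    fix x y assume "x \<in> cls \<phi> ` Vs N" "y \<in> cls \<phi> ` Vs N"
    then show "madd (Fq \<phi>) x y = madd (Fq \<phi>) y x" by (auto simp: Fq_add add.commute)
  next
    fix x assume "x \<in> cls \<phi> ` Vs N"
    then obtain u where u: "u \<in> Vs N" "x = cls \<phi> u" by blast
    then show "madd (Fq \<phi>) (cls \<phi> 0) x = x" using Fq_add[OF Vs_0 u(1)] by simp
  next
    fix x assume "x \<in> cls \<phi> ` Vs N"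
    then obtain u where u: "u \<in> Vs N" "x = cls \<phi> u" by blast
    then show "\<exists>y\<in>cls \<phi> ` Vs N. madd (Fq \<phi>) x y = cls \<phi> 0"
      using Vs_neg[OF u(1)] by (intro bexI[of _ "cls \<phi> (- u)"]) (auto simp: Fq_add)
  next
    fix x y r assume "x \<in> cls \<phi> ` Vs N" "y \<in> cls \<phi> ` Vs N"
    then obtain u u' where u: "u \<in> Vs N" "x = cls \<phi> u" "u' \<in> Vs N" "y = cls \<phi> u'" by blast
    have e: "(\<lambda>j. (u + u') j * r) = (\<lambda>j. u j * r) + (\<lambda>j. u' j * r)" by (simp add: fun_eq_iff distrib_right)
    show "mact (Fq \<phi>) (madd (Fq \<phi>) x y) r = madd (Fq \<phi>) (mact (Fq \<phi>) x r) (mact (Fq \<phi>) y r)"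
      unfolding u Fq_add[OF u(1,3)] Fq_act[OF Vs_add[OF u(1,3)]] Fq_act[OF u(1)] Fq_act[OF u(3)]
        Fq_add[OF Vs_mult[OF u(1)] Vs_mult[OF u(3)]] e ..
  next
    fix x r s assume "x \<in> cls \<phi> ` Vs N"
    then obtain u where u: "u \<in> Vs N" "x = cls \<phi> u" by blast
    have e: "(\<lambda>j. u j * (r + s)) = (\<lambda>j. u j * r) + (\<lambda>j. u j * s)" by (simp add: fun_eq_iff distrib_left)
    show "mact (Fq \<phi>) x (r + s) = madd (Fq \<phi>) (mact (Fq \<phi>) x r) (mact (Fq \<phi>) x s)"
      unfolding u Fq_act[OF u(1)] Fq_add[OF Vs_mult[OF u(1)] Vs_mult[OF u(1)]] e ..
  next
    fix x r s assume "x \<in> cls \<phi> ` Vs N"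
    then show "mact (Fq \<phi>) x (r * s) = mact (Fq \<phi>) (mact (Fq \<phi>) x r) s"
      by (auto simp: Fq_act Vs_mult mult.assoc)
  next
    fix x assume "x \<in> cls \<phi> ` Vs N"
    then show "mact (Fq \<phi>) x 1 = x" by (auto simp: Fq_act)
  qed
qed

lemma ee_V: "i < N \<Longrightarrow> ee i \<in> Vs N"
  by (auto simp: ee_def Vs_def)

lemma msum_cls: "(\<And>j. j < n \<Longrightarrow> f j \<in> Vs N) \<Longrightarrow>
   msum (Fq \<phi>) (\<lambda>j. cls \<phi> (f j)) n = cls \<phi> (\<Sum>j<n. f j)"
proof (induction n)
  case 0 then show ?case using cls_0 by (simp add: Fq_zero zero_fun_def)
next
  case (Suc n)
  have "(\<Sum>j<n. f j) \<in> Vs N" using Suc.prems by (auto simp: Vs_def sum_fun_apply)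
  then show ?case using Suc by (simp add: Fq_add plus_fun_def)
qed

lemma gen_sum: "msum (Fq \<phi>) (\<lambda>j. mact (Fq \<phi>) (cls \<phi> (ee j)) (c j)) N = cls \<phi> (\<lambda>l. if l < N then c l else 0)"
proof -
  have "msum (Fq \<phi>) (\<lambda>j. mact (Fq \<phi>) (cls \<phi> (ee j)) (c j)) N =
        msum (Fq \<phi>) (\<lambda>j. cls \<phi> (\<lambda>l. ee j l * c j)) N"
    by (intro msum_cong) (simp add: Fq_act ee_V)
  also have "\<dots> = cls \<phi> (\<Sum>j<N. (\<lambda>l. ee j l * c j))"
    by (intro msum_cls) (simp add: Vs_mult ee_V)
  also have "(\<Sum>j<N. (\<lambda>l. ee j l * c j)) = (\<lambda>l. if l < N then c l else 0)"
  proof (rule ext)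
    fix l
    have "(\<Sum>j<N. (\<lambda>l. ee j l * c j)) l = (\<Sum>j<N. ee j l * c j)" by (rule sum_fun_apply)
    also have "\<dots> = (\<Sum>j<N. if l = j then c j else 0)" by (rule sum.cong) (auto simp: ee_def)
    also have "\<dots> = (if l < N then c l else 0)" by (simp add: sum.delta)
    finally show "(\<Sum>j<N. (\<lambda>l. ee j l * c j)) l = (if l < N then c l else 0)" .
  qed
  finally show ?thesis .
qed

lemma row_K: "i < m \<Longrightarrow> (\<lambda>l. if l < N then E i l else 0) \<in> Ks \<phi>"
proof -
  assume i: "i < m"
  have "\<And>l. (\<Sum>k<m. E k l * (if k = i then 1 else 0)) = (\<Sum>k<m. if k = i then E k l else 0)"
    by (rule sum.cong) auto
  then have "\<And>l. (\<Sum>k<m. E k l * (if k = i then 1 else 0)) = E i l" using i by (simp add: sum.delta')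
  then show ?thesis unfolding Ks_alt
    by (intro CollectI exI[of _ "\<lambda>k. if k = i then 1 else 0"]) (simp add: fun_eq_iff)
qed

lemma cls_K: "v \<in> Ks \<phi> \<Longrightarrow> cls \<phi> v = Ks \<phi>"
  using cls_eq[of v 0] Ks_V[of v] Vs_0 cls_0 by simp

lemma Fq_fin_pres: "fin_pres (Fq \<phi>)"
proof -
  have h1: "\<forall>i<N. cls \<phi> (ee i) \<in> mcarrier (Fq \<phi>)" by (simp add: Fq_carrier ee_V)
  have h2: "\<forall>y\<in>mcarrier (Fq \<phi>). \<exists>a. y = msum (Fq \<phi>) (\<lambda>i. mact (Fq \<phi>) (cls \<phi> (ee i)) (a i)) N"
  proof
    fix y assume "y \<in> mcarrier (Fq \<phi>)"
    then obtain u where u: "u \<in> Vs N" "y = cls \<phi> u" by (auto simp: Fq_carrier)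
    have "(\<lambda>l. if l < N then u l else 0) = u" using u by (auto simp: Vs_def fun_eq_iff)
    then show "\<exists>a. y = msum (Fq \<phi>) (\<lambda>i. mact (Fq \<phi>) (cls \<phi> (ee i)) (a i)) N"
      using u gen_sum[of u] by auto
  qed
  have h3: "\<forall>j<m. msum (Fq \<phi>) (\<lambda>i. mact (Fq \<phi>) (cls \<phi> (ee i)) (E j i)) N = mzero (Fq \<phi>)"
    by (simp add: gen_sum Fq_zero cls_K row_K)
  have h4: "\<forall>a. msum (Fq \<phi>) (\<lambda>i. mact (Fq \<phi>) (cls \<phi> (ee i)) (a i)) N = mzero (Fq \<phi>) \<longrightarrow>
      (\<exists>s. \<forall>i<N. a i = (\<Sum>j<m. E j i * s j))"
  proof (intro allI impI)
    fix a assume "msum (Fq \<phi>) (\<lambda>i. mact (Fq \<phi>) (cls \<phi> (ee i)) (a i)) N = mzero (Fq \<phi>)"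
    then have e: "cls \<phi> (\<lambda>l. if l < N then a l else 0) = cls \<phi> 0" by (simp add: gen_sum Fq_zero cls_0)
    have "(\<lambda>l. if l < N then a l else 0) \<in> Vs N" by (auto simp: Vs_def)
    then have "(\<lambda>l. if l < N then a l else 0) \<in> Ks \<phi>" using e cls_eq[of _ 0] Vs_0 by auto
    then obtain s where "(\<lambda>l. if l < N then a l else 0) = (\<lambda>j. if j < N then (\<Sum>i<m. E i j * s i) else 0)"
      by (auto simp: Ks_alt)
    then have "\<forall>i<N. a i = (\<Sum>j<m. E j i * s j)" by (auto simp: fun_eq_iff) metis
    then show "\<exists>s. \<forall>i<N. a i = (\<Sum>j<m. E j i * s j)" by blast
  qed
  show ?thesis unfolding fin_pres_def
    apply (rule conjI[OF Fq_module])
    apply (rule exI[of _ N], rule exI[of _ "\<lambda>i. cls \<phi> (ee i)"])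
    using h1 h2 h3 h4 by blast
qed

lemma xhat_pp1: "0 < N \<Longrightarrow> cls \<phi> (ee 0) \<in> pp1 (Fq \<phi>) \<phi>"
  unfolding pp1_def
proof (intro CollectI conjI exI[of _ "\<lambda>j. cls \<phi> (ee j)"])
  assume "0 < N" then show "cls \<phi> (ee 0) \<in> mcarrier (Fq \<phi>)" by (simp add: Fq_carrier ee_V)
  show "sol (Fq \<phi>) \<phi> (\<lambda>j. cls \<phi> (ee j))"
    unfolding p sol_def2
  proof (intro conjI allI impI)
    fix j assume "j < N" then show "cls (N, m, E) (ee j) \<in> mcarrier (Fq (N, m, E))"
      using Fq_carrier ee_V p by (metis imageI)
  next
    fix i assume i: "i < m"
    show "msum (Fq (N, m, E)) (\<lambda>j. mact (Fq (N, m, E)) (cls (N, m, E) (ee j)) (E i j)) N = mzero (Fq (N, m, E))"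
      using gen_sum[of "E i"] cls_K[OF row_K[OF i]] Fq_zero p by simp
  qed
qed simp

lemma ev_wd:
  assumes M: "right_module M" and w: "sol M \<phi> w" and d: "u - u' \<in> Ks \<phi>"
  shows "ev M N w u = ev M N w u'"
proof -
  interpret rm M by (rule rm.intro[OF M])
  have wc: "\<And>j. j < N \<Longrightarrow> w j \<in> mcarrier M" and we: "\<And>i. i < m \<Longrightarrow> msum M (\<lambda>j. mact M (w j) (E i j)) N = mzero M"
    using w p by (auto simp: sol_def2)
  obtain s where s: "u - u' = (\<lambda>j. if j < N then (\<Sum>i<m. E i j * s i) else 0)" using d by (auto simp: Ks_alt)
  have uj: "\<And>j. j < N \<Longrightarrow> u j = u' j + (\<Sum>i<m. E i j * s i)"
    using s by (auto simp: fun_eq_iff) (metis add.commute diff_add_cancel)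
  have "ev M N w u = msum M (\<lambda>j. madd M (mact M (w j) (u' j)) (mact M (w j) (\<Sum>i<m. E i j * s i))) N"
    unfolding ev_def using wc uj by (intro msum_cong) (simp add: act_radd)
  also have "\<dots> = madd M (ev M N w u') (msum M (\<lambda>j. mact M (w j) (\<Sum>i<m. E i j * s i)) N)"
    unfolding ev_def using wc by (intro msum_add) auto
  also have "msum M (\<lambda>j. mact M (w j) (\<Sum>i<m. E i j * s i)) N =
             msum M (\<lambda>j. msum M (\<lambda>i. mact M (mact M (w j) (E i j)) (s i)) m) N"
    using wc by (intro msum_cong) (simp add: act_rsum act_mult)
  also have "\<dots> = msum M (\<lambda>i. msum M (\<lambda>j. mact M (mact M (w j) (E i j)) (s i)) N) m"
    using wc by (intro msum_swap) auto
  also have "\<dots> = msum M (\<lambda>i. mact M (msum M (\<lambda>j. mact M (w j) (E i j)) N) (s i)) m"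
    using wc by (intro msum_cong) (simp add: msum_act)
  also have "\<dots> = mzero M"
    using we by (intro msum_zero) simp
  finally show ?thesis unfolding ev_def using wc by simp
qed

lemma Fq_univ:
  assumes M: "right_module M" and w: "sol M \<phi> w" and N: "0 < N"
  shows "\<exists>v\<in>rhom (Fq \<phi>) M. v (cls \<phi> (ee 0)) = w 0"
proof -
  interpret rm M by (rule rm.intro[OF M])
  have wc: "\<And>j. j < N \<Longrightarrow> w j \<in> mcarrier M"
    using w p by (auto simp: sol_def2)
  define v where "v = restrict (\<lambda>U. ev M N w (SOME u. u \<in> U)) (mcarrier (Fq \<phi>))"
  have vc: "v (cls \<phi> u) = ev M N w u" if u: "u \<in> Vs N" for u
  proof -
    have "(SOME u'. u' \<in> cls \<phi> u) \<in> cls \<phi> u" using cls_self[OF u] by (rule someI[where P="\<lambda>u'. u' \<in> cls \<phi> u"])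
    then have "(SOME u'. u' \<in> cls \<phi> u) - u \<in> Ks \<phi>" by (simp add: cls_alt)
    then show ?thesis using ev_wd[OF M w] u by (simp add: v_def Fq_carrier)
  qed
  have evc: "ev M N w u \<in> mcarrier M" for u unfolding ev_def using wc by simp
  have "v \<in> rhom (Fq \<phi>) M"
    unfolding rhom_def
  proof (intro CollectI conjI ballI allI)
    show "v \<in> mcarrier (Fq \<phi>) \<rightarrow>\<^sub>E mcarrier M"
      using evc by (auto simp: v_def)
  next
    fix x y assume "x \<in> mcarrier (Fq \<phi>)" "y \<in> mcarrier (Fq \<phi>)"
    then obtain u u' where u: "u \<in> Vs N" "x = cls \<phi> u" "u' \<in> Vs N" "y = cls \<phi> u'"
      by (auto simp: Fq_carrier)
    have "ev M N w (u + u') = madd M (ev M N w u) (ev M N w u')"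
      unfolding ev_def using wc by (simp add: act_radd msum_add[symmetric] cong: msum_cong)
    then show "v (madd (Fq \<phi>) x y) = madd M (v x) (v y)"
      using u by (simp add: Fq_add vc Vs_add)
  next
    fix x r assume "x \<in> mcarrier (Fq \<phi>)"
    then obtain u where u: "u \<in> Vs N" "x = cls \<phi> u" by (auto simp: Fq_carrier)
    have "ev M N w (\<lambda>j. u j * r) = mact M (ev M N w u) r"
      unfolding ev_def using wc by (simp add: act_mult msum_act cong: msum_cong)
    then show "v (mact (Fq \<phi>) x r) = mact M (v x) r"
      using u by (simp add: Fq_act vc Vs_mult)
  qed
  moreover have "v (cls \<phi> (ee 0)) = w 0"
  proof -
    have "ev M N w (ee 0) = mact M (w 0) (ee 0 0)"
      unfolding ev_def using wc N by (intro msum_single) (auto simp: ee_def)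
    then show ?thesis using vc[OF ee_V[OF N]] wc N by (simp add: ee_def)
  qed
  ultimately show ?thesis by blast
qed

end


lemma Fq_module': "right_module (Fq \<phi>)"
  by (cases \<phi>) (metis Fq_module)
lemma Fq_fin_pres': "fin_pres (Fq \<phi>)"
  by (cases \<phi>) (metis Fq_fin_pres)
lemma xhat_pp1': "0 < fst \<phi> \<Longrightarrow> cls \<phi> (ee 0) \<in> pp1 (Fq \<phi>) \<phi>"
  by (cases \<phi>) (metis xhat_pp1 fst_conv)
lemma Fq_univ': "right_module M \<Longrightarrow> sol M \<phi> w \<Longrightarrow> 0 < fst \<phi> \<Longrightarrow>
   \<exists>v\<in>rhom (Fq \<phi>) M. v (cls \<phi> (ee 0)) = w 0"
  by (cases \<phi>) (metis Fq_univ fst_conv)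

lemma fin_pres_rm: "fin_pres M \<Longrightarrow> right_module M"
  by (simp add: fin_pres_def)

primrec itc :: "(nat \<Rightarrow> ('r::ring_1, 'c) rmod) \<Rightarrow> (nat \<Rightarrow> 'c \<Rightarrow> 'c) \<Rightarrow> nat \<Rightarrow> nat \<Rightarrow> 'c \<Rightarrow> 'c" where
  "itc C h n 0 = restrict id (mcarrier (C n))"
| "itc C h n (Suc k) = restrict (h (n + k) \<circ> itc C h n k) (mcarrier (C n))"

lemma itc_hom:
  assumes "\<And>n. right_module (C n)" "\<And>n. h n \<in> rhom (C n) (C (Suc n))"
  shows "itc C h n k \<in> rhom (C n) (C (n + k))"
proof (induction k)
  case 0 then show ?case using rhom_id[OF assms(1)] by (simp only: itc.simps add_0_right)
next
  case (Suc k)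
  then show ?case using rhom_comp[OF assms(1) Suc assms(2)[of "n + k"]] by (simp only: itc.simps add_Suc_right)
qed

lemma itc_comp:
  assumes "\<And>n. right_module (C n)" "\<And>n. h n \<in> rhom (C n) (C (Suc n))"
    and x: "x \<in> mcarrier (C n)"
  shows "itc C h (n + k) l (itc C h n k x) = itc C h n (k + l) x"
proof (induction l)
  case 0
  have "itc C h n k x \<in> mcarrier (C (n + k))" using itc_hom[of C h, OF assms(1,2)] x rhom_closed by metis
  then show ?case by simp
next
  case (Suc l)
  have "itc C h n k x \<in> mcarrier (C (n + k))" using itc_hom[of C h, OF assms(1,2)] x rhom_closed by metis
  then show ?case using Suc x by (simp add: add.assoc)
qed

lemma itc_dirsys:
  assumes "\<And>n. right_module (C n)" "\<And>n. h n \<in> rhom (C n) (C (Suc n))"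
  shows "omega_dirsys C (\<lambda>m n. itc C h n (m - n))"
  unfolding omega_dirsys_def
proof (intro conjI allI impI ballI)
  fix n m :: nat assume "n \<le> m"
  then show "itc C h n (m - n) \<in> rhom (C n) (C m)" using itc_hom[of C h, OF assms, of n "m - n"] by simp
next
  fix n x assume "x \<in> mcarrier (C n)" then show "itc C h n (n - n) x = x" by simp
next
  fix n m k x assume nm: "n \<le> m \<and> m \<le> k" and x: "x \<in> mcarrier (C n)"
  have "itc C h (n + (m - n)) (k - m) (itc C h n (m - n) x) = itc C h n ((m - n) + (k - m)) x"
    by (rule itc_comp[of C h, OF assms x])
  then show "itc C h m (k - m) (itc C h n (m - n) x) = itc C h n (k - n) x"
    using nm by (simp add: add.commute)
qed

lemma ub_exists:
  fixes n :: nat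
  assumes "I \<noteq> {}" "\<forall>i\<in>I. \<forall>j\<in>I. \<exists>k\<in>I. le i k \<and> le j k"
    "\<forall>i\<in>I. \<forall>j\<in>I. \<forall>k\<in>I. le i j \<and> le j k \<longrightarrow> le i k"
  shows "(\<And>j. j < n \<Longrightarrow> a j \<in> I) \<Longrightarrow> \<exists>k\<in>I. \<forall>j<n. le (a j) k"
proof (induction n)
  case 0 then show ?case using assms(1) by auto
next
  case (Suc n)
  then obtain k where k: "k \<in> I" "\<forall>j<n. le (a j) k" by auto
  have an: "a n \<in> I" using Suc.prems[of n] by simp
  obtain k' where k': "k' \<in> I" "le k k'" "le (a n) k'" using bspec[OF bspec[OF assms(2) k(1)] an] by blast
  have "\<forall>j<Suc n. le (a j) k'"
  proof (intro allI impI)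
    fix j assume j: "j < Suc n"
    show "le (a j) k'"
    proof (cases "j = n")
      case True then show ?thesis using k' by simp
    next
      case False
      then have "j < n" using j by simp
      then have "le (a j) k" "a j \<in> I" using k Suc.prems[of j] by auto
      then show ?thesis using assms(3) k(1) k' by blast
    qed
  qed
  then show ?case using k' by blast
qed

lemma dirlim_pp:
  fixes T :: "('r::ring_1, 'm) rmod" and D :: "'i \<Rightarrow> ('r, 'c) rmod"
  assumes T: "right_module T"
    and I: "I \<noteq> {}"
    and trans: "\<forall>i\<in>I. \<forall>j\<in>I. \<forall>k\<in>I. le i j \<and> le j k \<longrightarrow> le i k"
    and dir: "\<forall>i\<in>I. \<forall>j\<in>I. \<exists>k\<in>I. le i k \<and> le j k"
    and Dm: "\<forall>i\<in>I. right_module (D i)"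
    and fh: "\<forall>i\<in>I. \<forall>j\<in>I. le i j \<longrightarrow> f i j \<in> rhom (D i) (D j)"
    and fc: "\<forall>i\<in>I. \<forall>j\<in>I. \<forall>k\<in>I. le i j \<and> le j k \<longrightarrow>
            (\<forall>x\<in>mcarrier (D i). f j k (f i j x) = f i k x)"
    and gh: "\<forall>i\<in>I. g i \<in> rhom (D i) T"
    and gc: "\<forall>i\<in>I. \<forall>j\<in>I. le i j \<longrightarrow> (\<forall>x\<in>mcarrier (D i). g j (f i j x) = g i x)"
    and Tc: "mcarrier T = (\<Union>i\<in>I. g i ` mcarrier (D i))"
    and ker: "\<forall>i\<in>I. \<forall>x\<in>mcarrier (D i). g i x = mzero T \<longrightarrow>
            (\<exists>j\<in>I. le i j \<and> f i j x = mzero (D j))"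
    and t: "t \<in> pp1 T \<phi>" and N0: "0 < fst \<phi>"
  shows "\<exists>k\<in>I. \<exists>d\<in>pp1 (D k) \<phi>. g k d = t"
proof -
  obtain N m E where p: "\<phi> = (N, m, E)" by (cases \<phi>) auto
  obtain w where w: "sol T \<phi> w" "w 0 = t" using t by (auto simp: pp1_def)
  have wc: "\<And>j. j < N \<Longrightarrow> w j \<in> mcarrier T" and we: "\<And>i. i < m \<Longrightarrow> msum T (\<lambda>j. mact T (w j) (E i j)) N = mzero T"
    using w p by (auto simp: sol_def2)
  have exq: "\<forall>j. \<exists>q. j < N \<longrightarrow> fst q \<in> I \<and> snd q \<in> mcarrier (D (fst q)) \<and> g (fst q) (snd q) = w j"
    using wc Tc by fastforce
  obtain q where q0: "\<forall>j. j < N \<longrightarrow> fst (q j) \<in> I \<and> snd (q j) \<in> mcarrier (D (fst (q j))) \<and> g (fst (q j)) (snd (q j)) = w j"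
    using choice[OF exq] by blast
  then have q: "\<And>j. j < N \<Longrightarrow> fst (q j) \<in> I \<and> snd (q j) \<in> mcarrier (D (fst (q j))) \<and> g (fst (q j)) (snd (q j)) = w j"
    by blast
  obtain k0 where k0: "k0 \<in> I" "\<forall>j<N. le (fst (q j)) k0"
    using ub_exists[OF I dir trans, of N "\<lambda>j. fst (q j)"] q by blast
  define d' where "d' = (\<lambda>j. f (fst (q j)) k0 (snd (q j)))"
  have qI: "fst (q j) \<in> I" and qc: "snd (q j) \<in> mcarrier (D (fst (q j)))"
    and qg: "g (fst (q j)) (snd (q j)) = w j" and qle: "le (fst (q j)) k0" if j: "j < N" for j
    using q[OF j] k0(2) j by auto
  have d'c: "d' j \<in> mcarrier (D k0)" if j: "j < N" for j
  proof -
    have "f (fst (q j)) k0 \<in> rhom (D (fst (q j))) (D k0)"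
      using fh qI[OF j] k0(1) qle[OF j] by simp
    then show ?thesis unfolding d'_def using qc[OF j] by (rule rhom_closed)
  qed
  have d'g: "g k0 (d' j) = w j" if j: "j < N" for j
  proof -
    have "g k0 (f (fst (q j)) k0 (snd (q j))) = g (fst (q j)) (snd (q j))"
      using gc qI[OF j] k0(1) qle[OF j] qc[OF j] by simp
    then show ?thesis unfolding d'_def using qg[OF j] by simp
  qed
  interpret Dk0: rm "D k0" using Dm k0 by (simp add: rm_def)
  define x where "x = (\<lambda>i. msum (D k0) (\<lambda>j. mact (D k0) (d' j) (E i j)) N)"
  have xc: "\<And>i. x i \<in> mcarrier (D k0)" unfolding x_def using d'c by simp
  have gk0: "g k0 \<in> rhom (D k0) T" using gh k0(1) by simp
  have gx: "\<And>i. i < m \<Longrightarrow> g k0 (x i) = mzero T"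
  proof -
    fix i assume i: "i < m"
    have "g k0 (x i) = msum T (\<lambda>j. g k0 (mact (D k0) (d' j) (E i j))) N"
      unfolding x_def using d'c gk0 Dk0.rmod T by (intro rhom_msum) auto
    also have "\<dots> = msum T (\<lambda>j. mact T (w j) (E i j)) N"
      using d'c d'g gk0 by (intro msum_cong) (simp add: rhom_act[of "g k0" "D k0" T])
    finally show "g k0 (x i) = mzero T" using we[OF i] by simp
  qed
  have exb: "\<forall>i. \<exists>b. i < m \<longrightarrow> b \<in> I \<and> le k0 b \<and> f k0 b (x i) = mzero (D b)"
  proof
    fix i show "\<exists>b. i < m \<longrightarrow> b \<in> I \<and> le k0 b \<and> f k0 b (x i) = mzero (D b)"
    proof (cases "i < m")
      case True
      then have "\<exists>j\<in>I. le k0 j \<and> f k0 j (x i) = mzero (D j)"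
        using ker k0(1) xc[of i] gx[OF True] by simp
      then show ?thesis by blast
    qed simp
  qed
  obtain b where b0: "\<forall>i. i < m \<longrightarrow> b i \<in> I \<and> le k0 (b i) \<and> f k0 (b i) (x i) = mzero (D (b i))"
    using choice[OF exb] by blast
  have bI: "b i \<in> I" and bl: "le k0 (b i)" and bz: "f k0 (b i) (x i) = mzero (D (b i))" if "i < m" for i
    using b0 that by auto
  obtain k1 where k1: "k1 \<in> I" "\<forall>i<Suc m. le (if i < m then b i else k0) k1"
  proof -
    have "\<exists>k\<in>I. \<forall>i<Suc m. le (if i < m then b i else k0) k"
      by (rule ub_exists[OF I dir trans]) (simp add: bI k0(1))
    then show ?thesis using that by blast
  qed
  have k01: "le k0 k1" using k1(2) spec[OF k1(2), of m] by simp
  have bk1: "le (b i) k1" if "i < m" for i using spec[OF k1(2), of i] that by simp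
  define d where "d = (\<lambda>j. f k0 k1 (d' j))"
  have f01: "f k0 k1 \<in> rhom (D k0) (D k1)" using fh k0(1) k1(1) k01 by simp
  have dc: "d j \<in> mcarrier (D k1)" if "j < N" for j
    using rhom_closed[OF f01 d'c[OF that]] unfolding d_def .
  have dg: "g k1 (d j) = w j" if "j < N" for j
  proof -
    have "g k1 (f k0 k1 (d' j)) = g k0 (d' j)" using gc k0(1) k1(1) k01 d'c[OF that] by simp
    then show ?thesis using d'g[OF that] unfolding d_def by simp
  qed
  have "sol (D k1) \<phi> d"
    unfolding p sol_def2
  proof (intro conjI allI impI)
    fix j assume "j < N" then show "d j \<in> mcarrier (D k1)" by (rule dc)
  next
    fix i assume i: "i < m"
    have "msum (D k1) (\<lambda>j. mact (D k1) (d j) (E i j)) N = msum (D k1) (\<lambda>j. f k0 k1 (mact (D k0) (d' j) (E i j))) N"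
      unfolding d_def using d'c f01 by (intro msum_cong) (simp add: rhom_act[of "f k0 k1" "D k0" "D k1"])
    also have "\<dots> = f k0 k1 (x i)"
      unfolding x_def using d'c f01 Dm k0(1) k1(1) by (intro rhom_msum[symmetric]) auto
    also have "\<dots> = f (b i) k1 (f k0 (b i) (x i))"
    proof -
      have "\<forall>x\<in>mcarrier (D k0). f (b i) k1 (f k0 (b i) x) = f k0 k1 x"
        using fc bI[OF i] k0(1) k1(1) bk1[OF i] bl[OF i] by simp
      then show ?thesis using xc by simp
    qed
    also have "\<dots> = mzero (D k1)"
    proof -
      have "f (b i) k1 \<in> rhom (D (b i)) (D k1)" using fh bI[OF i] k1(1) bk1[OF i] by simp
      moreover have "right_module (D (b i))" "right_module (D k1)" using Dm bI[OF i] k1(1) by auto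
      ultimately show ?thesis using bz[OF i] rhom_zero by metis
    qed
    finally show "msum (D k1) (\<lambda>j. mact (D k1) (d j) (E i j)) N = mzero (D k1)" .
  qed
  moreover have "d 0 \<in> mcarrier (D k1)" "g k1 (d 0) = t" using dc dg N0 p w(2) by auto
  ultimately have "d 0 \<in> pp1 (D k1) \<phi>" unfolding pp1_def by blast
  then show ?thesis using k1 \<open>g k1 (d 0) = t\<close> by blast
qed


lemma mlat0:
  assumes "hom_invsys_ML D c T"
  shows "\<exists>m. \<forall>k\<ge>m. (\<lambda>u. restrict (u \<circ> c k 0) (mcarrier (D 0))) ` rhom (D k) T =
       (\<lambda>u. restrict (u \<circ> c m 0) (mcarrier (D 0))) ` rhom (D m) T"
proof -
  have "\<forall>n. \<exists>m\<ge>n. \<forall>k\<ge>m. (\<lambda>u. restrict (u \<circ> c k n) (mcarrier (D n))) ` rhom (D k) T =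
       (\<lambda>u. restrict (u \<circ> c m n) (mcarrier (D n))) ` rhom (D m) T"
    using assms unfolding hom_invsys_ML_def mittag_leffler_def .
  from spec[OF this, of 0] obtain m where "\<forall>k\<ge>m. (\<lambda>u. restrict (u \<circ> c k 0) (mcarrier (D 0))) ` rhom (D k) T =
       (\<lambda>u. restrict (u \<circ> c m 0) (mcarrier (D 0))) ` rhom (D m) T" by (elim exE conjE)
  then show ?thesis by (rule exI)
qed

lemma T_stab:
  fixes \<C> :: "('r::ring_1, 'c) rmod set" and T :: "('r, 'm) rmod" and \<psi> :: "nat \<Rightarrow> 'r fm"
  assumes cov: "cov_finite \<C>" and lim: "in_dirlim TYPE('i) \<C> T"
    and MLh: "\<forall>(D :: nat \<Rightarrow> ('r, 'c) rmod) c. (\<forall>n. D n \<in> \<C>) \<and> omega_dirsys D c \<longrightarrow> hom_invsys_ML D c T"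
    and pos: "\<And>n. 0 < fst (\<psi> n)"
    and dec: "\<And>n (M::('r, 'c) rmod). right_module M \<Longrightarrow> pp1 M (\<psi> (Suc n)) \<subseteq> pp1 M (\<psi> n)"
  shows "\<exists>m. \<forall>k\<ge>m. pp1 T (\<psi> k) = pp1 T (\<psi> m)"
proof -
  obtain I :: "'i set" and le D f g where L:
        "I \<noteq> {}"
        "(\<forall>i\<in>I. \<forall>j\<in>I. \<forall>k\<in>I. le i j \<and> le j k \<longrightarrow> le i k)"
        "(\<forall>i\<in>I. \<forall>j\<in>I. \<exists>k\<in>I. le i k \<and> le j k)"
        "(\<forall>i\<in>I. D i \<in> \<C>)"
        "(\<forall>i\<in>I. \<forall>j\<in>I. le i j \<longrightarrow> f i j \<in> rhom (D i) (D j))"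
        "(\<forall>i\<in>I. \<forall>j\<in>I. \<forall>k\<in>I. le i j \<and> le j k \<longrightarrow>
            (\<forall>x\<in>mcarrier (D i). f j k (f i j x) = f i k x))"
        "(\<forall>i\<in>I. g i \<in> rhom (D i) T)"
        "(\<forall>i\<in>I. \<forall>j\<in>I. le i j \<longrightarrow> (\<forall>x\<in>mcarrier (D i). g j (f i j x) = g i x))"
        "mcarrier T = (\<Union>i\<in>I. g i ` mcarrier (D i))"
        "(\<forall>i\<in>I. \<forall>x\<in>mcarrier (D i). g i x = mzero T \<longrightarrow>
            (\<exists>j\<in>I. le i j \<and> f i j x = mzero (D j)))"
    using lim unfolding in_dirlim_def
    apply (elim conjE exE)
    apply (rule that)
    apply assumption+
    done
  have T: "right_module T" using lim unfolding in_dirlim_def by blast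
  have Crm: "\<And>C. C \<in> \<C> \<Longrightarrow> right_module C" using cov fin_pres_rm unfolding cov_finite_def by blast
  have Dm: "\<forall>i\<in>I. right_module (D i)" using L(4) Crm by blast
  note lim_pp = dirlim_pp[OF T L(1) L(2) L(3) Dm L(5) L(6) L(7) L(8) L(9) L(10)]
  have covF: "\<forall>F :: ('r, (nat \<Rightarrow> 'r) set) rmod. fin_pres F \<longrightarrow>
        (\<exists>Cp\<in>\<C>. \<exists>p\<in>rhom F Cp. \<forall>C'\<in>\<C>. \<forall>g\<in>rhom F C'.
            \<exists>h\<in>rhom Cp C'. \<forall>x\<in>mcarrier F. g x = h (p x))"
    using cov unfolding cov_finite_def by blast
  have exq: "\<forall>n. \<exists>q. fst q \<in> \<C> \<and> snd q \<in> rhom (Fq (\<psi> n)) (fst q) \<and>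
      (\<forall>C'\<in>\<C>. \<forall>g\<in>rhom (Fq (\<psi> n)) C'. \<exists>h\<in>rhom (fst q) C'. \<forall>x\<in>mcarrier (Fq (\<psi> n)). g x = h (snd q x))"
  proof
    fix n
    obtain Cp p where "Cp \<in> \<C>" "p \<in> rhom (Fq (\<psi> n)) Cp" "\<forall>C'\<in>\<C>. \<forall>g\<in>rhom (Fq (\<psi> n)) C'.
            \<exists>h\<in>rhom Cp C'. \<forall>x\<in>mcarrier (Fq (\<psi> n)). g x = h (p x)"
      using covF Fq_fin_pres' by blast
    then show "\<exists>q. fst q \<in> \<C> \<and> snd q \<in> rhom (Fq (\<psi> n)) (fst q) \<and>
      (\<forall>C'\<in>\<C>. \<forall>g\<in>rhom (Fq (\<psi> n)) C'. \<exists>h\<in>rhom (fst q) C'. \<forall>x\<in>mcarrier (Fq (\<psi> n)). g x = h (snd q x))"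
      by (intro exI[of _ "(Cp, p)"]) simp
  qed
  obtain q where q: "\<forall>n. fst (q n) \<in> \<C> \<and> snd (q n) \<in> rhom (Fq (\<psi> n)) (fst (q n)) \<and>
      (\<forall>C'\<in>\<C>. \<forall>g\<in>rhom (Fq (\<psi> n)) C'. \<exists>h\<in>rhom (fst (q n)) C'. \<forall>x\<in>mcarrier (Fq (\<psi> n)). g x = h (snd (q n) x))"
    using choice[OF exq] by blast
  define Cp where "Cp = (\<lambda>n. fst (q n))"
  define p where "p = (\<lambda>n. snd (q n))"
  define xh where "xh = (\<lambda>n. cls (\<psi> n) (ee 0))"
  have CpC: "\<And>n. Cp n \<in> \<C>" and ph: "\<And>n. p n \<in> rhom (Fq (\<psi> n)) (Cp n)"
    and pu: "\<And>n C' g. C' \<in> \<C> \<Longrightarrow> g \<in> rhom (Fq (\<psi> n)) C' \<Longrightarrow>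
       \<exists>h\<in>rhom (Cp n) C'. \<forall>x\<in>mcarrier (Fq (\<psi> n)). g x = h (p n x)"
    using q unfolding Cp_def p_def by blast+
  have Cpm: "\<And>n. right_module (Cp n)" using CpC Crm by blast
  have xhp: "\<And>n. xh n \<in> pp1 (Fq (\<psi> n)) (\<psi> n)" unfolding xh_def using xhat_pp1' pos by blast
  have xhc: "\<And>n. xh n \<in> mcarrier (Fq (\<psi> n))" using xhp unfolding pp1_def by blast
  have pxp: "\<And>n. p n (xh n) \<in> pp1 (Cp n) (\<psi> n)"
    using pp1_hom[OF Fq_module' Cpm ph xhp] .
  define EE where "EE = (\<lambda>n. (\<lambda>u. u (p n (xh n))) ` rhom (Cp n) T)"
  have EEeq: "EE n = pp1 T (\<psi> n)" for n
  proof
    show "EE n \<subseteq> pp1 T (\<psi> n)" unfolding EE_def using pp1_hom[OF Cpm T _ pxp] by blast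
  next
    show "pp1 T (\<psi> n) \<subseteq> EE n"
    proof
      fix t assume t: "t \<in> pp1 T (\<psi> n)"
      obtain k d where k: "k \<in> I" "d \<in> pp1 (D k) (\<psi> n)" "g k d = t" using lim_pp[OF t pos] by blast
      obtain w where w: "sol (D k) (\<psi> n) w" "w 0 = d" using k(2) unfolding pp1_def by blast
      obtain v where v: "v \<in> rhom (Fq (\<psi> n)) (D k)" "v (xh n) = d"
        using Fq_univ'[OF _ w(1) pos] Dm k(1) w(2) unfolding xh_def by blast
      obtain h where h: "h \<in> rhom (Cp n) (D k)" "\<forall>x\<in>mcarrier (Fq (\<psi> n)). v x = h (p n x)"
        using pu[OF _ v(1)] L(4) k(1) by blast
      define u where "u = restrict (g k \<circ> h) (mcarrier (Cp n))"
      have "u \<in> rhom (Cp n) T" unfolding u_def using rhom_comp[OF Cpm h(1)] L(7) k(1) by blast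
      moreover have "u (p n (xh n)) = t"
        using h(2) xhc v(2) k(3) rhom_closed[OF ph xhc] unfolding u_def by simp
      ultimately show "t \<in> EE n" unfolding EE_def by (intro image_eqI[of _ _ u]) auto
    qed
  qed
  have exh: "\<forall>n. \<exists>h. h \<in> rhom (Cp n) (Cp (Suc n)) \<and> h (p n (xh n)) = p (Suc n) (xh (Suc n))"
  proof
    fix n
    have "p (Suc n) (xh (Suc n)) \<in> pp1 (Cp (Suc n)) (\<psi> n)" using pxp dec[OF Cpm] by blast
    then obtain w where w: "sol (Cp (Suc n)) (\<psi> n) w" "w 0 = p (Suc n) (xh (Suc n))" unfolding pp1_def by blast
    obtain v where v: "v \<in> rhom (Fq (\<psi> n)) (Cp (Suc n))" "v (xh n) = p (Suc n) (xh (Suc n))"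
      using Fq_univ'[OF Cpm w(1) pos] w(2) unfolding xh_def by auto
    obtain h where h: "h \<in> rhom (Cp n) (Cp (Suc n))" "\<forall>x\<in>mcarrier (Fq (\<psi> n)). v x = h (p n x)"
      using pu[OF CpC v(1)] by blast
    show "\<exists>h. h \<in> rhom (Cp n) (Cp (Suc n)) \<and> h (p n (xh n)) = p (Suc n) (xh (Suc n))"
      using h v(2) xhc by (intro exI[of _ h]) auto
  qed
  obtain hh where hh: "\<forall>n. hh n \<in> rhom (Cp n) (Cp (Suc n)) \<and> hh n (p n (xh n)) = p (Suc n) (xh (Suc n))"
    using choice[OF exh] by blast
  have hhr: "\<And>n. hh n \<in> rhom (Cp n) (Cp (Suc n))" using hh by blast
  define c where "c = (\<lambda>m n. itc Cp hh n (m - n))"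
  have ds: "omega_dirsys Cp c" unfolding c_def by (rule itc_dirsys[of Cp hh, OF Cpm hhr])
  have "hom_invsys_ML Cp c T" using MLh[rule_format, of Cp c] CpC ds by simp
  then obtain m where m: "\<forall>k\<ge>m. (\<lambda>u. restrict (u \<circ> c k 0) (mcarrier (Cp 0))) ` rhom (Cp k) T =
       (\<lambda>u. restrict (u \<circ> c m 0) (mcarrier (Cp 0))) ` rhom (Cp m) T"
    using mlat0 by blast
  have y0: "p 0 (xh 0) \<in> mcarrier (Cp 0)" using pxp unfolding pp1_def by blast
  have cx: "c k 0 (p 0 (xh 0)) = p k (xh k)" for k
  proof (induction k)
    case 0 then show ?case using y0 by (simp add: c_def)
  next
    case (Suc k)
    then show ?case using y0 hh by (simp add: c_def)
  qed
  have EEk: "EE k = (\<lambda>\<rho>. \<rho> (p 0 (xh 0))) ` ((\<lambda>u. restrict (u \<circ> c k 0) (mcarrier (Cp 0))) ` rhom (Cp k) T)" for k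
    unfolding EE_def image_image using y0 cx by simp
  have "\<forall>k\<ge>m. pp1 T (\<psi> k) = pp1 T (\<psi> m)"
  proof (intro allI impI)
    fix k assume mk: "m \<le> k"
    have "(\<lambda>u. restrict (u \<circ> c k 0) (mcarrier (Cp 0))) ` rhom (Cp k) T =
       (\<lambda>u. restrict (u \<circ> c m 0) (mcarrier (Cp 0))) ` rhom (Cp m) T" using m mk by blast
    then have "EE k = EE m" unfolding EEk[of k] EEk[of m] by (simp only:)
    then show "pp1 T (\<psi> k) = pp1 T (\<psi> m)" using EEeq[of k] EEeq[of m] by simp
  qed
  then show ?thesis by (rule exI)
qed


lemma dsum_carrier: "mcarrier (dsum I T) = {u. u \<in> I \<rightarrow>\<^sub>E mcarrier T \<and> finite {i\<in>I. u i \<noteq> mzero T}}"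
  by (simp add: dsum_def)
lemma dsum_add: "madd (dsum I T) u v = restrict (\<lambda>i. madd T (u i) (v i)) I"
  by (simp add: dsum_def)
lemma dsum_zero: "mzero (dsum I T) = restrict (\<lambda>i. mzero T) I"
  by (simp add: dsum_def)
lemma dsum_act: "mact (dsum I T) u r = restrict (\<lambda>i. mact T (u i) r) I"
  by (simp add: dsum_def)

context rm begin

lemma dsum_module: "right_module (dsum I M)"
  unfolding right_module_def dsum_carrier dsum_add dsum_zero dsum_act
proof (intro conjI ballI allI)
  show "restrict (\<lambda>i. mzero M) I \<in> {u \<in> I \<rightarrow>\<^sub>E mcarrier M. finite {i \<in> I. u i \<noteq> mzero M}}" by simp
next
  fix x y assume x: "x \<in> {u \<in> I \<rightarrow>\<^sub>E mcarrier M. finite {i \<in> I. u i \<noteq> mzero M}}"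
    and y: "y \<in> {u \<in> I \<rightarrow>\<^sub>E mcarrier M. finite {i \<in> I. u i \<noteq> mzero M}}"
  have "{i \<in> I. restrict (\<lambda>i. madd M (x i) (y i)) I i \<noteq> mzero M} \<subseteq> {i \<in> I. x i \<noteq> mzero M} \<union> {i \<in> I. y i \<noteq> mzero M}"
    using x y by auto
  then have fin: "finite {i \<in> I. restrict (\<lambda>i. madd M (x i) (y i)) I i \<noteq> mzero M}"
    by (rule finite_subset) (use x y in auto)
  show "restrict (\<lambda>i. madd M (x i) (y i)) I \<in> {u \<in> I \<rightarrow>\<^sub>E mcarrier M. finite {i \<in> I. u i \<noteq> mzero M}}"
  proof (intro CollectI conjI)
    show "restrict (\<lambda>i. madd M (x i) (y i)) I \<in> I \<rightarrow>\<^sub>E mcarrier M" using x y by (auto simp: PiE_iff)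
  qed (rule fin)
next
  fix x r assume x: "x \<in> {u \<in> I \<rightarrow>\<^sub>E mcarrier M. finite {i \<in> I. u i \<noteq> mzero M}}"
  have "{i \<in> I. restrict (\<lambda>i. mact M (x i) r) I i \<noteq> mzero M} \<subseteq> {i \<in> I. x i \<noteq> mzero M}"
    using x by auto
  then have fin: "finite {i \<in> I. restrict (\<lambda>i. mact M (x i) r) I i \<noteq> mzero M}"
    by (rule finite_subset) (use x in auto)
  show "restrict (\<lambda>i. mact M (x i) r) I \<in> {u \<in> I \<rightarrow>\<^sub>E mcarrier M. finite {i \<in> I. u i \<noteq> mzero M}}"
  proof (intro CollectI conjI)
    show "restrict (\<lambda>i. mact M (x i) r) I \<in> I \<rightarrow>\<^sub>E mcarrier M" using x by (auto simp: PiE_iff)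
  qed (rule fin)
next
  fix x y z assume "x \<in> {u \<in> I \<rightarrow>\<^sub>E mcarrier M. finite {i \<in> I. u i \<noteq> mzero M}}"
    "y \<in> {u \<in> I \<rightarrow>\<^sub>E mcarrier M. finite {i \<in> I. u i \<noteq> mzero M}}"
    "z \<in> {u \<in> I \<rightarrow>\<^sub>E mcarrier M. finite {i \<in> I. u i \<noteq> mzero M}}"
  then show "restrict (\<lambda>i. madd M (restrict (\<lambda>i. madd M (x i) (y i)) I i) (z i)) I =
             restrict (\<lambda>i. madd M (x i) (restrict (\<lambda>i. madd M (y i) (z i)) I i)) I"
    by (auto simp: fun_eq_iff add_assoc PiE_iff)
next
  fix x y assume "x \<in> {u \<in> I \<rightarrow>\<^sub>E mcarrier M. finite {i \<in> I. u i \<noteq> mzero M}}"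
    "y \<in> {u \<in> I \<rightarrow>\<^sub>E mcarrier M. finite {i \<in> I. u i \<noteq> mzero M}}"
  then show "restrict (\<lambda>i. madd M (x i) (y i)) I = restrict (\<lambda>i. madd M (y i) (x i)) I"
    by (auto simp: fun_eq_iff add_comm PiE_iff)
next
  fix x assume "x \<in> {u \<in> I \<rightarrow>\<^sub>E mcarrier M. finite {i \<in> I. u i \<noteq> mzero M}}"
  then show "restrict (\<lambda>i. madd M (restrict (\<lambda>i. mzero M) I i) (x i)) I = x"
    by (auto simp: fun_eq_iff PiE_iff extensional_def)
next
  fix x assume x: "x \<in> {u \<in> I \<rightarrow>\<^sub>E mcarrier M. finite {i \<in> I. u i \<noteq> mzero M}}"
  have "{i \<in> I. restrict (\<lambda>i. mneg M (x i)) I i \<noteq> mzero M} \<subseteq> {i \<in> I. x i \<noteq> mzero M}"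
    using x by auto
  then have fin: "finite {i \<in> I. restrict (\<lambda>i. mneg M (x i)) I i \<noteq> mzero M}"
    by (rule finite_subset) (use x in auto)
  have "restrict (\<lambda>i. mneg M (x i)) I \<in> {u \<in> I \<rightarrow>\<^sub>E mcarrier M. finite {i \<in> I. u i \<noteq> mzero M}}"
  proof (intro CollectI conjI)
    show "restrict (\<lambda>i. mneg M (x i)) I \<in> I \<rightarrow>\<^sub>E mcarrier M" using x by (auto simp: PiE_iff)
  qed (rule fin)
  moreover have "restrict (\<lambda>i. madd M (x i) (restrict (\<lambda>i. mneg M (x i)) I i)) I = restrict (\<lambda>i. mzero M) I"
    using x by (auto simp: fun_eq_iff PiE_iff)
  ultimately show "\<exists>y\<in>{u \<in> I \<rightarrow>\<^sub>E mcarrier M. finite {i \<in> I. u i \<noteq> mzero M}}.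
          restrict (\<lambda>i. madd M (x i) (y i)) I = restrict (\<lambda>i. mzero M) I" by blast
next
  fix x y r assume "x \<in> {u \<in> I \<rightarrow>\<^sub>E mcarrier M. finite {i \<in> I. u i \<noteq> mzero M}}"
    "y \<in> {u \<in> I \<rightarrow>\<^sub>E mcarrier M. finite {i \<in> I. u i \<noteq> mzero M}}"
  then show "restrict (\<lambda>i. mact M (restrict (\<lambda>i. madd M (x i) (y i)) I i) r) I =
       restrict (\<lambda>i. madd M (restrict (\<lambda>i. mact M (x i) r) I i) (restrict (\<lambda>i. mact M (y i) r) I i)) I"
    by (auto simp: fun_eq_iff act_add PiE_iff)
next
  fix x r s assume "x \<in> {u \<in> I \<rightarrow>\<^sub>E mcarrier M. finite {i \<in> I. u i \<noteq> mzero M}}"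
  then show "restrict (\<lambda>i. mact M (x i) (r + s)) I =
       restrict (\<lambda>i. madd M (restrict (\<lambda>i. mact M (x i) r) I i) (restrict (\<lambda>i. mact M (x i) s) I i)) I"
    by (auto simp: fun_eq_iff act_radd PiE_iff)
next
  fix x r s assume "x \<in> {u \<in> I \<rightarrow>\<^sub>E mcarrier M. finite {i \<in> I. u i \<noteq> mzero M}}"
  then show "restrict (\<lambda>i. mact M (x i) (r * s)) I = restrict (\<lambda>i. mact M (restrict (\<lambda>i. mact M (x i) r) I i) s) I"
    by (auto simp: fun_eq_iff act_mult PiE_iff)
next
  fix x assume "x \<in> {u \<in> I \<rightarrow>\<^sub>E mcarrier M. finite {i \<in> I. u i \<noteq> mzero M}}"
  then show "restrict (\<lambda>i. mact M (x i) 1) I = x"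
    by (auto simp: fun_eq_iff PiE_iff extensional_def)
qed

lemma dsum_msum: "(\<And>j. j < n \<Longrightarrow> f j \<in> mcarrier (dsum I M)) \<Longrightarrow>
   msum (dsum I M) f n = restrict (\<lambda>i. msum M (\<lambda>j. f j i) n) I"
proof (induction n)
  case 0 then show ?case by (simp add: dsum_zero)
next
  case (Suc n)
  then show ?case by (simp add: dsum_add fun_eq_iff)
qed

lemma pp1_dsum: "pp1 (dsum I M) \<phi> = {u \<in> mcarrier (dsum I M). \<forall>i\<in>I. u i \<in> pp1 M \<phi>}"
proof -
  obtain N m E where p: "\<phi> = (N, m, E)" by (cases \<phi>) auto
  interpret X: rm "dsum I M" by (rule rm.intro, rule dsum_module)
  show ?thesis
  proof
    show "pp1 (dsum I M) \<phi> \<subseteq> {u \<in> mcarrier (dsum I M). \<forall>i\<in>I. u i \<in> pp1 M \<phi>}"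
    proof (intro subsetI CollectI conjI ballI)
      fix u i assume u: "u \<in> pp1 (dsum I M) \<phi>" and i: "i \<in> I"
      then obtain w where w: "sol (dsum I M) \<phi> w" "w 0 = u" "u \<in> mcarrier (dsum I M)" by (auto simp: pp1_def)
      have wc: "\<And>j. j < N \<Longrightarrow> w j \<in> mcarrier (dsum I M)" using w p by (auto simp: sol_def2)
      have "sol M \<phi> (\<lambda>j. w j i)" unfolding p sol_def2
      proof (intro conjI allI impI)
        fix j assume "j < N" then show "w j i \<in> mcarrier M" using wc i by (auto simp: dsum_carrier)
      next
        fix r assume r: "r < m"
        have "msum (dsum I M) (\<lambda>j. mact (dsum I M) (w j) (E r j)) N = mzero (dsum I M)"
          using w(1) p r by (simp add: sol_def2)
        then have "msum (dsum I M) (\<lambda>j. mact (dsum I M) (w j) (E r j)) N i = mzero M"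
          using i by (simp add: dsum_zero)
        moreover have "msum (dsum I M) (\<lambda>j. mact (dsum I M) (w j) (E r j)) N i =
             msum M (\<lambda>j. mact M (w j i) (E r j)) N"
          apply (subst dsum_msum)
           apply (rule X.act_closed, rule wc, simp)
          using i by (simp add: dsum_act)
        ultimately show "msum M (\<lambda>j. mact M (w j i) (E r j)) N = mzero M" by simp
      qed
      moreover have "u i \<in> mcarrier M" using w(3) i by (auto simp: dsum_carrier)
      ultimately show "u i \<in> pp1 M \<phi>" using w(2) unfolding pp1_def by auto
    next
      fix u assume "u \<in> pp1 (dsum I M) \<phi>" then show "u \<in> mcarrier (dsum I M)" by (simp add: pp1_def)
    qed
  next
    show "{u \<in> mcarrier (dsum I M). \<forall>i\<in>I. u i \<in> pp1 M \<phi>} \<subseteq> pp1 (dsum I M) \<phi>"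
    proof
      fix u assume "u \<in> {u \<in> mcarrier (dsum I M). \<forall>i\<in>I. u i \<in> pp1 M \<phi>}"
      then have u: "u \<in> mcarrier (dsum I M)" "\<And>i. i \<in> I \<Longrightarrow> u i \<in> pp1 M \<phi>" by auto
      define W where "W = (\<lambda>i. SOME w. sol M \<phi> w \<and> w 0 = u i)"
      have W: "sol M \<phi> (W i) \<and> W i 0 = u i" if "i \<in> I" for i
      proof -
        have "\<exists>w. sol M \<phi> w \<and> w 0 = u i" using u(2)[OF that] unfolding pp1_def by blast
        then show ?thesis unfolding W_def by (rule someI_ex)
      qed
      define w where "w = (\<lambda>j. restrict (\<lambda>i. if u i = mzero M then mzero M else W i j) I)"
      have sup: "{i \<in> I. w j i \<noteq> mzero M} \<subseteq> {i \<in> I. u i \<noteq> mzero M}" for j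
        unfolding w_def by auto
      have finu: "finite {i \<in> I. u i \<noteq> mzero M}" using u(1) by (simp add: dsum_carrier)
      have wc: "w j \<in> mcarrier (dsum I M)" if j: "j < N" for j
        unfolding dsum_carrier
      proof (intro CollectI conjI)
        show "w j \<in> I \<rightarrow>\<^sub>E mcarrier M" unfolding w_def using W j p by (auto simp: sol_def2)
        show "finite {i \<in> I. w j i \<noteq> mzero M}" using finite_subset[OF sup finu] .
      qed
      have w0: "w 0 = u"
        using W u(1) by (auto simp: w_def fun_eq_iff dsum_carrier PiE_iff extensional_def)
      have "sol (dsum I M) \<phi> w" unfolding p sol_def2
      proof (intro conjI allI impI)
        fix j assume "j < N" then show "w j \<in> mcarrier (dsum I M)" by (rule wc)
      next
        fix r assume r: "r < m"
        have "msum (dsum I M) (\<lambda>j. mact (dsum I M) (w j) (E r j)) N =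
              restrict (\<lambda>i. msum M (\<lambda>j. mact M (w j i) (E r j)) N) I"
          apply (subst dsum_msum)
           apply (rule X.act_closed, rule wc, simp)
          by (intro restrict_ext) (simp add: dsum_act)
        also have "\<dots> = restrict (\<lambda>i. mzero M) I"
        proof (rule restrict_ext)
          fix i assume i: "i \<in> I"
          show "msum M (\<lambda>j. mact M (w j i) (E r j)) N = mzero M"
          proof (cases "u i = mzero M")
            case True then show ?thesis using i by (intro msum_zero) (simp add: w_def)
          next
            case False
            have "msum M (\<lambda>j. mact M (w j i) (E r j)) N = msum M (\<lambda>j. mact M (W i j) (E r j)) N"
              using i False by (intro msum_cong) (simp add: w_def)
            also have "\<dots> = mzero M" using W[OF i] p r by (simp add: sol_def2)
            finally show ?thesis .
          qed
        qed
        finally show "msum (dsum I M) (\<lambda>j. mact (dsum I M) (w j) (E r j)) N = mzero (dsum I M)"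
          by (simp add: dsum_zero)
      qed
      then show "u \<in> pp1 (dsum I M) \<phi>" using u(1) w0 unfolding pp1_def by auto
    qed
  qed
qed

end

primrec chainc :: "(nat \<Rightarrow> 'r::ring_1 fm) \<Rightarrow> nat \<Rightarrow> 'r fm" where
  "chainc \<phi> 0 = \<phi> 0"
| "chainc \<phi> (Suc n) = pconj (chainc \<phi> n) (\<phi> (Suc n))"

lemma fst_chainc: "(\<And>n. 0 < fst (\<phi> n)) \<Longrightarrow> 0 < fst (chainc \<phi> n)"
  by (induction n) (auto simp: fst_pconj)

lemma X_noDCC:
  fixes T :: "('r::ring_1, 'm) rmod"
  assumes T: "right_module T"
    and Tst: "\<And>\<psi>. (\<And>n. 0 < fst (\<psi> n)) \<Longrightarrow> (\<And>n. \<exists>\<chi>. 0 < fst \<chi> \<and> \<psi> (Suc n) = pconj (\<psi> n) \<chi>) \<Longrightarrow>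
        \<exists>m. \<forall>k\<ge>m. pp1 T (\<psi> k) = pp1 T (\<psi> m)"
    and pos: "\<And>n. 0 < fst (\<phi> n)"
    and sd: "\<And>n. pp1 (dsum I T) (\<phi> (Suc n)) \<subset> pp1 (dsum I T) (\<phi> n)"
  shows False
proof -
  interpret X: rm "dsum I T" by (rule rm.intro, rule rm.dsum_module, rule rm.intro, rule T)
  interpret TT: rm T by (rule rm.intro, rule T)
  define \<psi> where "\<psi> = chainc \<phi>"
  have ppos: "\<And>n. 0 < fst (\<psi> n)" unfolding \<psi>_def using fst_chainc pos by blast
  have ch: "\<exists>\<chi>. 0 < fst \<chi> \<and> \<psi> (Suc n) = pconj (\<psi> n) \<chi>" for n
    using pos unfolding \<psi>_def by (intro exI[of _ "\<phi> (Suc n)"]) simp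
  obtain m where m: "\<forall>k\<ge>m. pp1 T (\<psi> k) = pp1 T (\<psi> m)" using Tst[of \<psi>, OF ppos ch] by (elim exE)
  have eqX: "pp1 (dsum I T) (\<psi> n) = pp1 (dsum I T) (\<phi> n)" for n
  proof (induction n)
    case 0 then show ?case by (simp add: \<psi>_def)
  next
    case (Suc n)
    have "pp1 (dsum I T) (\<psi> (Suc n)) = pp1 (dsum I T) (\<psi> n) \<inter> pp1 (dsum I T) (\<phi> (Suc n))"
      unfolding \<psi>_def chainc.simps by (rule X.pp1_pconj) (use ppos pos in \<open>auto simp: \<psi>_def\<close>)
    also have "\<dots> = pp1 (dsum I T) (\<phi> n) \<inter> pp1 (dsum I T) (\<phi> (Suc n))" by (simp only: Suc)
    also have "\<dots> = pp1 (dsum I T) (\<phi> (Suc n))" using sd[of n] by blast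
    finally show ?case .
  qed
  have "pp1 T (\<psi> (Suc m)) = pp1 T (\<psi> m)" using spec[OF m, of "Suc m"] by simp
  then have "pp1 (dsum I T) (\<psi> (Suc m)) = pp1 (dsum I T) (\<psi> m)" by (simp only: TT.pp1_dsum)
  then have "pp1 (dsum I T) (\<phi> (Suc m)) = pp1 (dsum I T) (\<phi> m)" by (simp only: eqX)
  then show False using sd[of m] by simp
qed


definition zf :: "'r::ring_1 fm \<Rightarrow> nat set \<Rightarrow> 'r fm" where
  "zf \<phi> J = (case \<phi> of (N, m, E) \<Rightarrow> (N, m + N, \<lambda>i j. if i < m then E i j else if j = i - m \<and> j \<in> J then 1 else 0))"

definition sh :: "'r::ring_1 fm \<Rightarrow> nat set \<Rightarrow> 'r fm" where
  "sh \<phi> J = (case \<phi> of (N, m, E) \<Rightarrow> (Suc N, m + N, \<lambda>i j.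
     if i < m then (if j = 0 then 0 else E i (j - 1))
     else if i - m \<in> J then (if j = Suc (i - m) then 1 else if j = 0 then -1 else 0) else 0))"

lemma fst_zf: "fst (zf \<phi> J) = fst \<phi>" by (cases \<phi>) (simp add: zf_def)
lemma fst_sh: "fst (sh \<phi> J) = Suc (fst \<phi>)" by (cases \<phi>) (simp add: sh_def)

context rm begin

lemma sol_zf:
  assumes "J \<subseteq> {..<fst \<phi>}"
  shows "sol M (zf \<phi> J) w \<longleftrightarrow> sol M \<phi> w \<and> (\<forall>j\<in>J. w j = mzero M)"
proof -
  obtain N m E where p: "\<phi> = (N, m, E)" by (cases \<phi>) auto
  define E' where "E' = (\<lambda>i j. if i < m then E i j else if j = i - m \<and> j \<in> J then 1 else 0)"
  have z: "zf \<phi> J = (N, m + N, E')" using p by (simp add: zf_def E'_def)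
  show ?thesis
  proof (cases "\<forall>j<N. w j \<in> mcarrier M")
    case False then show ?thesis using z p by (auto simp: sol_def2)
  next
    case True
    have r1: "\<And>i. i < m \<Longrightarrow> msum M (\<lambda>j. mact M (w j) (E' i j)) N = msum M (\<lambda>j. mact M (w j) (E i j)) N"
      by (intro msum_cong) (simp add: E'_def)
    have r2: "\<And>k. k < N \<Longrightarrow> msum M (\<lambda>j. mact M (w j) (E' (m + k) j)) N = (if k \<in> J then w k else mzero M)"
    proof -
      fix k assume k: "k < N"
      show "msum M (\<lambda>j. mact M (w j) (E' (m + k) j)) N = (if k \<in> J then w k else mzero M)"
      proof (cases "k \<in> J")
        case True
        then show ?thesis using k True \<open>\<forall>j<N. w j \<in> mcarrier M\<close>
          by (subst msum_single[of k]) (auto simp: E'_def)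
      next
        case False
        then show ?thesis unfolding if_not_P[OF False] using k True False by (intro msum_zero) (auto simp: E'_def)
      qed
    qed
    have "(\<forall>i<m + N. msum M (\<lambda>j. mact M (w j) (E' i j)) N = mzero M) \<longleftrightarrow>
          (\<forall>i<m. msum M (\<lambda>j. mact M (w j) (E i j)) N = mzero M) \<and> (\<forall>j\<in>J. w j = mzero M)"
    proof
      assume L: "\<forall>i<m + N. msum M (\<lambda>j. mact M (w j) (E' i j)) N = mzero M"
      show "(\<forall>i<m. msum M (\<lambda>j. mact M (w j) (E i j)) N = mzero M) \<and> (\<forall>j\<in>J. w j = mzero M)"
      proof (intro conjI allI impI ballI)
        fix i assume "i < m" then show "msum M (\<lambda>j. mact M (w j) (E i j)) N = mzero M" using L r1 by simp
      next
        fix j assume j: "j \<in> J"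
        then have "j < N" using assms p by auto
        then show "w j = mzero M" using L[rule_format, of "m + j"] r2[of j] j by simp
      qed
    next
      assume R: "(\<forall>i<m. msum M (\<lambda>j. mact M (w j) (E i j)) N = mzero M) \<and> (\<forall>j\<in>J. w j = mzero M)"
      show "\<forall>i<m + N. msum M (\<lambda>j. mact M (w j) (E' i j)) N = mzero M"
      proof (intro allI impI)
        fix i assume i: "i < m + N"
        show "msum M (\<lambda>j. mact M (w j) (E' i j)) N = mzero M"
        proof (cases "i < m")
          case True then show ?thesis using R r1 by simp
        next
          case False
          then obtain k where "i = m + k" "k < N" using i by (metis add_diff_inverse_nat add_less_cancel_left)
          then show ?thesis using r2[of k] R by auto
        qed
      qed
    qed
    then show ?thesis using True z p by (simp add: sol_def2)
  qed
qed

lemma sol_sh: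
  shows "sol M (sh \<phi> J) w \<longleftrightarrow> w 0 \<in> mcarrier M \<and> sol M \<phi> (\<lambda>j. w (Suc j)) \<and> (\<forall>k\<in>J. k < fst \<phi> \<longrightarrow> w (Suc k) = w 0)"
proof -
  obtain N m E where p: "\<phi> = (N, m, E)" by (cases \<phi>) auto
  define E' where "E' = (\<lambda>i j.
     if i < m then (if j = 0 then 0 else E i (j - 1))
     else if i - m \<in> J then (if j = Suc (i - m) then 1 else if j = 0 then -1 else 0) else 0)"
  have z: "sh \<phi> J = (Suc N, m + N, E')" using p by (simp add: sh_def E'_def)
  have cc: "(\<forall>j<Suc N. w j \<in> mcarrier M) \<longleftrightarrow> w 0 \<in> mcarrier M \<and> (\<forall>j<N. w (Suc j) \<in> mcarrier M)"
    by (metis less_Suc_eq_0_disj)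
  show ?thesis
  proof (cases "\<forall>j<Suc N. w j \<in> mcarrier M")
    case False then show ?thesis using z p cc by (auto simp: sol_def2)
  next
    case True
    then have w0: "w 0 \<in> mcarrier M" and ws: "\<And>j. j < N \<Longrightarrow> w (Suc j) \<in> mcarrier M" by auto
    have sp: "\<And>i. msum M (\<lambda>j. mact M (w j) (E' i j)) (Suc N) =
        madd M (mact M (w 0) (E' i 0)) (msum M (\<lambda>j. mact M (w (Suc j)) (E' i (Suc j))) N)"
      using True by (intro msum_shift) auto
    have r1: "\<And>i. i < m \<Longrightarrow> msum M (\<lambda>j. mact M (w j) (E' i j)) (Suc N) = msum M (\<lambda>j. mact M (w (Suc j)) (E i j)) N"
    proof -
      fix i assume i: "i < m"
      have "msum M (\<lambda>j. mact M (w (Suc j)) (E' i (Suc j))) N = msum M (\<lambda>j. mact M (w (Suc j)) (E i j)) N"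
        using i by (intro msum_cong) (simp add: E'_def)
      then show "?thesis i" using sp[of i] i w0 ws by (simp add: E'_def)
    qed
    have r2: "\<And>k. k < N \<Longrightarrow> msum M (\<lambda>j. mact M (w j) (E' (m + k) j)) (Suc N) =
       (if k \<in> J then madd M (mneg M (w 0)) (w (Suc k)) else mzero M)"
    proof -
      fix k assume k: "k < N"
      show "msum M (\<lambda>j. mact M (w j) (E' (m + k) j)) (Suc N) =
       (if k \<in> J then madd M (mneg M (w 0)) (w (Suc k)) else mzero M)"
      proof (cases "k \<in> J")
        case True
        have "msum M (\<lambda>j. mact M (w (Suc j)) (E' (m + k) (Suc j))) N = w (Suc k)"
          using k True ws by (subst msum_single[of k]) (auto simp: E'_def)
        then show ?thesis using sp[of "m + k"] True w0 by (simp add: E'_def act_uminus)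
      next
        case False
        then show ?thesis unfolding if_not_P[OF False] using k True False by (intro msum_zero) (auto simp: E'_def)
      qed
    qed
    have eq: "\<And>k. k < N \<Longrightarrow> (madd M (mneg M (w 0)) (w (Suc k)) = mzero M) = (w (Suc k) = w 0)"
      using w0 ws by (metis add_comm add_eq_zero_iff neg_closed)
    have "(\<forall>i<m + N. msum M (\<lambda>j. mact M (w j) (E' i j)) (Suc N) = mzero M) \<longleftrightarrow>
          (\<forall>i<m. msum M (\<lambda>j. mact M (w (Suc j)) (E i j)) N = mzero M) \<and> (\<forall>k\<in>J. k < N \<longrightarrow> w (Suc k) = w 0)"
    proof
      assume L: "\<forall>i<m + N. msum M (\<lambda>j. mact M (w j) (E' i j)) (Suc N) = mzero M"
      show "(\<forall>i<m. msum M (\<lambda>j. mact M (w (Suc j)) (E i j)) N = mzero M) \<and> (\<forall>k\<in>J. k < N \<longrightarrow> w (Suc k) = w 0)"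
      proof (intro conjI allI impI ballI)
        fix i assume "i < m" then show "msum M (\<lambda>j. mact M (w (Suc j)) (E i j)) N = mzero M" using L r1 by simp
      next
        fix k assume k: "k \<in> J" "k < N"
        then show "w (Suc k) = w 0" using L[rule_format, of "m + k"] r2[of k] eq[of k] by simp
      qed
    next
      assume R: "(\<forall>i<m. msum M (\<lambda>j. mact M (w (Suc j)) (E i j)) N = mzero M) \<and> (\<forall>k\<in>J. k < N \<longrightarrow> w (Suc k) = w 0)"
      show "\<forall>i<m + N. msum M (\<lambda>j. mact M (w j) (E' i j)) (Suc N) = mzero M"
      proof (intro allI impI)
        fix i assume i: "i < m + N"
        show "msum M (\<lambda>j. mact M (w j) (E' i j)) (Suc N) = mzero M"
        proof (cases "i < m")
          case True then show ?thesis using R r1 by simp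
        next
          case False
          then obtain k where ik: "i = m + k" "k < N" using i by (metis add_diff_inverse_nat add_less_cancel_left)
          then show ?thesis using r2[of k] R eq[of k] by auto
        qed
      qed
    qed
    then show ?thesis using True z p w0 ws by (simp add: sol_def2)
  qed
qed

lemma sol_eqn1: "sol M (n, Suc 0, \<lambda>i j. c j) w \<longleftrightarrow> (\<forall>j<n. w j \<in> mcarrier M) \<and> msum M (\<lambda>j. mact M (w j) (c j)) n = mzero M"
  by (simp add: sol_def2)

end

lemma min_pp1:
  fixes X :: "('r::ring_1, 'x) rmod"
  assumes dcc: "\<not> (\<exists>\<phi>. (\<forall>n. 0 < fst (\<phi> n)) \<and> (\<forall>n. pp1 X (\<phi> (Suc n)) \<subset> pp1 X (\<phi> n)))"
    and Q: "q \<in> Q" "\<And>q. q \<in> Q \<Longrightarrow> 0 < fst (F q)"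
  shows "\<exists>q0\<in>Q. \<forall>q\<in>Q. \<not> (pp1 X (F q) \<subset> pp1 X (F q0))"
proof -
  define R where "R = {(S1, S2). S1 \<subset> S2 \<and> (\<exists>\<phi>. 0 < fst \<phi> \<and> S1 = pp1 X \<phi>)}"
  have "wf R"
  proof (rule ccontr)
    assume "\<not> wf R"
    then obtain G where G: "\<And>i. (G (Suc i), G i) \<in> R" unfolding wf_iff_no_infinite_down_chain by blast
    have "\<forall>i. \<exists>\<phi>. 0 < fst \<phi> \<and> G (Suc i) = pp1 X \<phi>" using G unfolding R_def by blast
    then obtain \<phi> where \<phi>: "\<And>i. 0 < fst (\<phi> i) \<and> G (Suc i) = pp1 X (\<phi> i)" by metis
    have "(\<forall>n. 0 < fst (\<phi> n)) \<and> (\<forall>n. pp1 X (\<phi> (Suc n)) \<subset> pp1 X (\<phi> n))"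
    proof (intro conjI allI)
      fix n show "0 < fst (\<phi> n)" using \<phi> by blast
      have "(G (Suc (Suc n)), G (Suc n)) \<in> R" by (rule G)
      then show "pp1 X (\<phi> (Suc n)) \<subset> pp1 X (\<phi> n)" using \<phi>[of n] \<phi>[of "Suc n"] unfolding R_def by simp
    qed
    then show False using dcc by blast
  qed
  then have "\<exists>z\<in>(\<lambda>q. pp1 X (F q)) ` Q. \<forall>y. (y, z) \<in> R \<longrightarrow> y \<notin> (\<lambda>q. pp1 X (F q)) ` Q"
    using Q(1) unfolding wf_eq_minimal by blast
  then obtain q0 where q0: "q0 \<in> Q" "\<forall>y. (y, pp1 X (F q0)) \<in> R \<longrightarrow> y \<notin> (\<lambda>q. pp1 X (F q)) ` Q" by blast
  have "\<forall>q\<in>Q. \<not> (pp1 X (F q) \<subset> pp1 X (F q0))"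
  proof (intro ballI notI)
    fix q assume q: "q \<in> Q" "pp1 X (F q) \<subset> pp1 X (F q0)"
    then have "(pp1 X (F q), pp1 X (F q0)) \<in> R" using Q(2) unfolding R_def by blast
    then show False using q0 q by blast
  qed
  then show ?thesis using q0 by blast
qed


lemma pure_sol:
  fixes A :: "('r::ring_1, 'a) rmod" and B :: "('r, 'b) rmod"
  assumes Am: "right_module A" and Bm: "right_module B" and pf: "pure_mono A B f"
    and w: "sol B \<phi> w" and J: "J \<subseteq> {..<fst \<phi>}"
    and a: "\<And>j. j \<in> J \<Longrightarrow> a j \<in> mcarrier A \<and> w j = f (a j)"
  shows "\<exists>w''. sol A \<phi> w'' \<and> (\<forall>j\<in>J. w'' j = a j)"
proof -
  interpret A: rm A by (rule rm.intro[OF Am])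
  interpret B: rm B by (rule rm.intro[OF Bm])
  obtain N m E where p: "\<phi> = (N, m, E)" by (cases \<phi>) auto
  have fh: "f \<in> rhom A B" using pf by (simp add: pure_mono_def)
  have wc: "\<And>j. j < N \<Longrightarrow> w j \<in> mcarrier B" and we: "\<And>i. i < m \<Longrightarrow> msum B (\<lambda>j. mact B (w j) (E i j)) N = mzero B"
    using w p by (auto simp: sol_def2)
  define E' where "E' = (\<lambda>i j. if j \<in> J then 0 else E i j)"
  define ah where "ah = (\<lambda>j. if j \<in> J then a j else mzero A)"
  have ahc: "\<And>j. ah j \<in> mcarrier A" using a by (simp add: ah_def)
  define s where "s = (\<lambda>i. msum A (\<lambda>j. mact A (ah j) (E i j)) N)"
  have sc: "\<And>i. s i \<in> mcarrier A" unfolding s_def using ahc by simp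
  define c where "c = (\<lambda>i. mneg A (s i))"
  have cc: "\<And>i. c i \<in> mcarrier A" unfolding c_def using sc by simp
  have fah: "\<And>j. j < N \<Longrightarrow> f (ah j) = (if j \<in> J then w j else mzero B)"
    using a fh Am Bm rhom_zero by (auto simp: ah_def)
  have split: "\<And>z zh j r r'. z \<in> mcarrier B \<Longrightarrow> zh = (if j \<in> J then z else mzero B) \<Longrightarrow>
      mact B z r = madd B (mact B z (if j \<in> J then 0 else r)) (mact B zh r)"
    by auto
  have prem: "\<forall>i<m. msum B (\<lambda>j. mact B (w j) (E' i j)) N = f (c i)"
  proof (intro allI impI)
    fix i assume i: "i < m"
    have "msum B (\<lambda>j. mact B (w j) (E i j)) N =
          msum B (\<lambda>j. madd B (mact B (w j) (E' i j)) (mact B (f (ah j)) (E i j))) N"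
      using wc fah by (intro msum_cong) (auto simp: E'_def)
    also have "\<dots> = madd B (msum B (\<lambda>j. mact B (w j) (E' i j)) N) (msum B (\<lambda>j. mact B (f (ah j)) (E i j)) N)"
      using wc ahc rhom_closed[OF fh] by (intro B.msum_add) auto
    also have "msum B (\<lambda>j. mact B (f (ah j)) (E i j)) N = f (s i)"
    proof -
      have "f (s i) = msum B (\<lambda>j. f (mact A (ah j) (E i j))) N"
        unfolding s_def using ahc by (intro rhom_msum[OF Am Bm fh]) simp
      also have "\<dots> = msum B (\<lambda>j. mact B (f (ah j)) (E i j)) N"
        using ahc by (intro msum_cong) (simp add: rhom_act[OF fh])
      finally show ?thesis by simp
    qed
    finally have "madd B (msum B (\<lambda>j. mact B (w j) (E' i j)) N) (f (s i)) = mzero B" using we[OF i] by simp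
    then have "f (s i) = mneg B (msum B (\<lambda>j. mact B (w j) (E' i j)) N)"
      using wc rhom_closed[OF fh sc] by (intro B.neg_unique) (auto simp: B.add_comm)
    then have "msum B (\<lambda>j. mact B (w j) (E' i j)) N = mneg B (f (s i))"
      using wc by (simp add: B.neg_neg)
    also have "\<dots> = f (c i)" unfolding c_def using rhom_neg[OF Am Bm fh sc] by simp
    finally show "msum B (\<lambda>j. mact B (w j) (E' i j)) N = f (c i)" .
  qed
  have ex: "\<exists>y. (\<forall>j<N. y j \<in> mcarrier B) \<and> (\<forall>i<m. msum B (\<lambda>j. mact B (y j) (E' i j)) N = f (c i))"
    using wc prem by blast
  have "(\<forall>i<m. c i \<in> mcarrier A)" using cc by simp
  then obtain x where x: "\<forall>j<N. x j \<in> mcarrier A" "\<forall>i<m. msum A (\<lambda>j. mact A (x j) (E' i j)) N = c i"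
    using pf ex unfolding pure_mono_def by blast
  define w'' where "w'' = (\<lambda>j. if j \<in> J then a j else x j)"
  have w''c: "\<And>j. j < N \<Longrightarrow> w'' j \<in> mcarrier A" using x a by (simp add: w''_def)
  have "sol A \<phi> w''" unfolding p sol_def2
  proof (intro conjI allI impI)
    fix j assume "j < N" then show "w'' j \<in> mcarrier A" by (rule w''c)
  next
    fix i assume i: "i < m"
    have "msum A (\<lambda>j. mact A (w'' j) (E i j)) N =
          msum A (\<lambda>j. madd A (mact A (x j) (E' i j)) (mact A (ah j) (E i j))) N"
      using x a by (intro msum_cong) (auto simp: E'_def w''_def ah_def)
    also have "\<dots> = madd A (msum A (\<lambda>j. mact A (x j) (E' i j)) N) (s i)"
      unfolding s_def using x ahc by (intro A.msum_add) auto
    also have "\<dots> = mzero A" using x(2) i sc by (simp add: c_def)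
    finally show "msum A (\<lambda>j. mact A (w'' j) (E i j)) N = mzero A" .
  qed
  then show ?thesis by (intro exI[of _ w'']) (simp add: w''_def)
qed


definition pres :: "('r::ring_1, 'b) rmod \<Rightarrow> ('r, 'x) rmod \<Rightarrow> ('b \<times> 'x) set \<Rightarrow> bool" where
  "pres B X G \<longleftrightarrow> (\<forall>\<phi> w J u. sol B \<phi> w \<and> J \<subseteq> {..<fst \<phi>} \<and> (\<forall>j\<in>J. (w j, u j) \<in> G) \<longrightarrow>
      (\<exists>w'. sol X \<phi> w' \<and> (\<forall>j\<in>J. w' j = u j)))"

lemma presD: "pres B X G \<Longrightarrow> sol B \<phi> w \<Longrightarrow> J \<subseteq> {..<fst \<phi>} \<Longrightarrow> (\<And>j. j \<in> J \<Longrightarrow> (w j, u j) \<in> G) \<Longrightarrow>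
      \<exists>w'. sol X \<phi> w' \<and> (\<forall>j\<in>J. w' j = u j)"
  unfolding pres_def by blast

lemma chain_finite:
  assumes C: "chain\<^sub>\<subseteq> C" "C \<noteq> {}" and F: "finite F" "F \<subseteq> \<Union>C"
  shows "\<exists>G\<in>C. F \<subseteq> G"
  using F
proof (induction F rule: finite_induct)
  case empty then show ?case using C(2) by blast
next
  case (insert x F)
  then obtain G1 where G1: "G1 \<in> C" "F \<subseteq> G1" by blast
  obtain G2 where G2: "G2 \<in> C" "x \<in> G2" using insert.prems by blast
  have "G1 \<subseteq> G2 \<or> G2 \<subseteq> G1" using C(1) G1(1) G2(1) unfolding chain_subset_def by blast
  then show ?case using G1 G2 by blast
qed

lemma pres_Union:
  assumes C: "chain\<^sub>\<subseteq> C" "C \<noteq> {}" "\<And>G. G \<in> C \<Longrightarrow> pres B X G"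
  shows "pres B X (\<Union>C)"
  unfolding pres_def
proof (intro allI impI, elim conjE)
  fix \<phi> w J u assume w: "sol B \<phi> w" and J: "J \<subseteq> {..<fst \<phi>}" and G: "\<forall>j\<in>J. (w j, u j) \<in> \<Union>C"
  have "finite ((\<lambda>j. (w j, u j)) ` J)" using J finite_subset by blast
  moreover have "(\<lambda>j. (w j, u j)) ` J \<subseteq> \<Union>C" using G by blast
  ultimately obtain G0 where "G0 \<in> C" "(\<lambda>j. (w j, u j)) ` J \<subseteq> G0" using chain_finite[OF C(1,2)] by blast
  then show "\<exists>w'. sol X \<phi> w' \<and> (\<forall>j\<in>J. w' j = u j)" using presD[OF C(3) w J] by blast
qed

definition Sset :: "('r::ring_1, 'x) rmod \<Rightarrow> 'r fm \<Rightarrow> nat set \<Rightarrow> (nat \<Rightarrow> 'x) \<Rightarrow> 'x set" where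
  "Sset X \<phi> J u = {t \<in> mcarrier X. \<exists>w'. sol X \<phi> w' \<and> w' 0 = t \<and> (\<forall>j\<in>J. w' j = u j)}"

context rm begin

lemma Sset_zf: "J \<subseteq> {..<fst \<phi>} \<Longrightarrow> pp1 M (zf \<phi> J) = Sset M \<phi> J (\<lambda>_. mzero M)"
  unfolding pp1_def Sset_def using sol_zf by auto

lemma Sset_diff:
  assumes "J \<subseteq> {..<fst \<phi>}" "s1 \<in> Sset M \<phi> J u" "s2 \<in> Sset M \<phi> J u"
  shows "madd M s1 (mneg M s2) \<in> Sset M \<phi> J (\<lambda>_. mzero M)"
proof -
  obtain w1 w2 where w: "sol M \<phi> w1" "w1 0 = s1" "\<forall>j\<in>J. w1 j = u j" "s1 \<in> mcarrier M"
    "sol M \<phi> w2" "w2 0 = s2" "\<forall>j\<in>J. w2 j = u j" "s2 \<in> mcarrier M"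
    using assms unfolding Sset_def by auto
  have "sol M \<phi> (\<lambda>j. madd M (w1 j) (mneg M (w2 j)))" by (rule sol_add[OF w(1) sol_neg[OF w(5)]])
  moreover have "\<forall>j\<in>J. madd M (w1 j) (mneg M (w2 j)) = mzero M"
  proof
    fix j assume j: "j \<in> J"
    then have "w2 j \<in> mcarrier M" using sol_carrier[OF w(5)] assms(1) by auto
    then show "madd M (w1 j) (mneg M (w2 j)) = mzero M" using w j by simp
  qed
  ultimately show ?thesis unfolding Sset_def using w by auto
qed

lemma Sset_add:
  assumes "s \<in> Sset M \<phi> J u" "h \<in> Sset M \<phi> J (\<lambda>_. mzero M)" "J \<subseteq> {..<fst \<phi>}"
  shows "madd M s h \<in> Sset M \<phi> J u"
proof -
  obtain w1 w2 where w: "sol M \<phi> w1" "w1 0 = s" "\<forall>j\<in>J. w1 j = u j" "s \<in> mcarrier M"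
    "sol M \<phi> w2" "w2 0 = h" "\<forall>j\<in>J. w2 j = mzero M" "h \<in> mcarrier M"
    using assms unfolding Sset_def by auto
  have "sol M \<phi> (\<lambda>j. madd M (w1 j) (w2 j))" by (rule sol_add[OF w(1) w(5)])
  moreover have "\<forall>j\<in>J. madd M (w1 j) (w2 j) = u j"
  proof
    fix j assume j: "j \<in> J"
    then have "w1 j \<in> mcarrier M" using sol_carrier[OF w(1)] assms(3) by auto
    then show "madd M (w1 j) (w2 j) = u j" using w j by simp
  qed
  ultimately show ?thesis unfolding Sset_def using w by auto
qed

lemma Sset_pconj:
  assumes "\<phi>1 = (N1, m1, E1)" "\<phi>2 = (N2, m2, E2)" "0 < N1" "0 < N2"
    and JJ: "J1 \<subseteq> {..<N1}"
  shows "Sset M (pconj \<phi>1 \<phi>2) (J1 \<union> (\<lambda>j. N1 + j) ` J2) (\<lambda>j. if j < N1 then u1 j else u2 (j - N1))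
     \<subseteq> Sset M \<phi>1 J1 u1 \<inter> Sset M \<phi>2 J2 u2"
  (is "?S3 \<subseteq> _")
proof
  fix t assume "t \<in> ?S3"
  then obtain w' where w': "t \<in> mcarrier M" "sol M (pconj \<phi>1 \<phi>2) w'" "w' 0 = t"
    "\<forall>j\<in>J1 \<union> (\<lambda>j. N1 + j) ` J2. w' j = (if j < N1 then u1 j else u2 (j - N1))"
    unfolding Sset_def by auto
  have s: "sol M \<phi>1 w'" "sol M \<phi>2 (\<lambda>j. w' (N1 + j))" "w' 0 = w' N1" using sol_pconj[OF assms(1-4)] w'(2) by auto
  have J1: "\<forall>j\<in>J1. w' j = u1 j" using w'(4) JJ by auto
  have J2: "\<forall>j\<in>J2. w' (N1 + j) = u2 j" using w'(4) by auto
  have "t \<in> Sset M \<phi>1 J1 u1" unfolding Sset_def using w'(1,3) s(1) J1 by blast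
  moreover have "t \<in> Sset M \<phi>2 J2 u2" unfolding Sset_def
    using w'(1,3) s(2,3) J2 by (intro CollectI conjI exI[of _ "\<lambda>j. w' (N1 + j)"]) auto
  ultimately show "t \<in> Sset M \<phi>1 J1 u1 \<inter> Sset M \<phi>2 J2 u2" by blast
qed

end

lemma ext_step:
  fixes B :: "('r::ring_1, 'b) rmod" and X :: "('r, 'x) rmod"
  assumes Bm: "right_module B" and Xm: "right_module X"
    and dcc: "\<not> (\<exists>\<phi>. (\<forall>n. 0 < fst (\<phi> n)) \<and> (\<forall>n. pp1 X (\<phi> (Suc n)) \<subset> pp1 X (\<phi> n)))"
    and pG: "pres B X G" and b: "b \<in> mcarrier B" and nb: "\<And>t. (b, t) \<notin> G"
  shows "\<exists>t\<in>mcarrier X. pres B X (insert (b, t) G)"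
proof -
  interpret X: rm X by (rule rm.intro[OF Xm])
  interpret B: rm B by (rule rm.intro[OF Bm])
  define Q where "Q = {(\<phi>::'r fm, w::nat\<Rightarrow>'b, J::nat set, u::nat\<Rightarrow>'x). 0 < fst \<phi> \<and> sol B \<phi> w \<and> w 0 = b \<and>
       J \<subseteq> {..<fst \<phi>} \<and> (\<forall>j\<in>J. (w j, u j) \<in> G)}"
  define F where "F = (\<lambda>(\<phi>::'r fm, w::nat\<Rightarrow>'b, J::nat set, u::nat\<Rightarrow>'x). zf \<phi> J)"
  define S where "S = (\<lambda>(\<phi>::'r fm, w::nat\<Rightarrow>'b, J::nat set, u::nat\<Rightarrow>'x). Sset X \<phi> J u)"
  have Qi: "(\<phi>, w, J, u) \<in> Q \<longleftrightarrow> 0 < fst \<phi> \<and> sol B \<phi> w \<and> w 0 = b \<and> J \<subseteq> {..<fst \<phi>} \<and> (\<forall>j\<in>J. (w j, u j) \<in> G)"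
    for \<phi> w J u by (simp add: Q_def)
  have q0: "((1, 0, \<lambda>_ _. 0), \<lambda>_. b, {}, \<lambda>_. mzero X) \<in> Q" using b by (simp add: Qi sol_def2)
  have FQ: "\<And>q. q \<in> Q \<Longrightarrow> 0 < fst (F q)" unfolding F_def by (auto simp: Qi fst_zf)
  have nonempty: "S q \<noteq> {}" if "q \<in> Q" for q
  proof -
    obtain \<phi> w J u where q: "q = (\<phi>, w, J, u)" by (cases q) auto
    then have a: "0 < fst \<phi>" "sol B \<phi> w" "J \<subseteq> {..<fst \<phi>}" "\<forall>j\<in>J. (w j, u j) \<in> G" using that Qi by auto
    obtain w' where w': "sol X \<phi> w'" "\<forall>j\<in>J. w' j = u j" using presD[OF pG a(2,3)] a(4) by blast
    have "w' 0 \<in> Sset X \<phi> J u" unfolding Sset_def using w' sol_carrier[OF w'(1) a(1)] by auto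
    then show ?thesis unfolding S_def q by auto
  qed
  obtain qs where qs: "qs \<in> Q" "\<forall>q\<in>Q. \<not> (pp1 X (F q) \<subset> pp1 X (F qs))"
    using min_pp1[where F=F and Q=Q, OF dcc q0 FQ] by blast
  obtain \<phi>s ws Js us where qse: "qs = (\<phi>s, ws, Js, us)" by (cases qs) auto
  obtain N1 m1 E1 where p1: "\<phi>s = (N1, m1, E1)" by (cases \<phi>s) auto
  have as: "0 < N1" "sol B \<phi>s ws" "ws 0 = b" "Js \<subseteq> {..<N1}" "\<forall>j\<in>Js. (ws j, us j) \<in> G"
    using qs(1) qse p1 Qi by auto
  obtain ts where ts: "ts \<in> S qs" using nonempty[OF qs(1)] by blast
  have tsS: "ts \<in> Sset X \<phi>s Js us" using ts qse S_def by simp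
  have tsc: "ts \<in> mcarrier X" using tsS unfolding Sset_def by auto
  have all: "ts \<in> Sset X \<phi> J u" if q: "(\<phi>, w, J, u) \<in> Q" for \<phi> w J u
  proof -
    obtain N2 m2 E2 where p2: "\<phi> = (N2, m2, E2)" by (cases \<phi>) auto
    have a: "0 < N2" "sol B \<phi> w" "w 0 = b" "J \<subseteq> {..<N2}" "\<forall>j\<in>J. (w j, u j) \<in> G"
      using q p2 Qi by auto
    define w3 where "w3 = (\<lambda>j. if j < N1 then ws j else w (j - N1))"
    define J3 where "J3 = Js \<union> (\<lambda>j. N1 + j) ` J"
    define u3 where "u3 = (\<lambda>j. if j < N1 then us j else u (j - N1))"
    have "sol B \<phi>s w3" using as(2) by (subst sol_cong[of _ w3 ws]) (auto simp: w3_def p1)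
    moreover have "sol B \<phi> (\<lambda>j. w3 (N1 + j))" using a(2) by (simp add: w3_def)
    moreover have "w3 0 = w3 N1" using as a by (simp add: w3_def)
    ultimately have s3: "sol B (pconj \<phi>s \<phi>) w3" using B.sol_pconj[OF p1 p2 as(1) a(1)] by simp
    have f3: "fst (pconj \<phi>s \<phi>) = N1 + N2" using p1 p2 by (simp add: fst_pconj)
    have J3s: "J3 \<subseteq> {..<fst (pconj \<phi>s \<phi>)}" using as(4) a(4) f3 by (auto simp: J3_def)
    have q3: "(pconj \<phi>s \<phi>, w3, J3, u3) \<in> Q"
      unfolding Qi using s3 J3s as a f3 by (auto simp: w3_def J3_def u3_def)
    have S3: "Sset X (pconj \<phi>s \<phi>) J3 u3 \<subseteq> Sset X \<phi>s Js us \<inter> Sset X \<phi> J u"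
      unfolding J3_def u3_def by (rule X.Sset_pconj[OF p1 p2 as(1) a(1) as(4)])
    have H3: "Sset X (pconj \<phi>s \<phi>) J3 (\<lambda>_. mzero X) \<subseteq> Sset X \<phi>s Js (\<lambda>_. mzero X)"
      using X.Sset_pconj[OF p1 p2 as(1) a(1) as(4), of J "\<lambda>_. mzero X" "\<lambda>_. mzero X"]
      unfolding J3_def by simp
    have F3: "pp1 X (F (pconj \<phi>s \<phi>, w3, J3, u3)) = Sset X (pconj \<phi>s \<phi>) J3 (\<lambda>_. mzero X)"
      unfolding F_def using X.Sset_zf[OF J3s] by simp
    have Fs: "pp1 X (F qs) = Sset X \<phi>s Js (\<lambda>_. mzero X)"
      unfolding F_def qse using X.Sset_zf[of Js \<phi>s] as(4) p1 by simp
    have Heq: "Sset X (pconj \<phi>s \<phi>) J3 (\<lambda>_. mzero X) = Sset X \<phi>s Js (\<lambda>_. mzero X)"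
      using qs(2) q3 F3 Fs H3 by blast
    obtain s3 where s3S: "s3 \<in> Sset X (pconj \<phi>s \<phi>) J3 u3" using nonempty[OF q3] unfolding S_def by auto
    have s3s: "s3 \<in> Sset X \<phi>s Js us" using S3 s3S by blast
    have s3c: "s3 \<in> mcarrier X" using s3S unfolding Sset_def by auto
    have d: "madd X ts (mneg X s3) \<in> Sset X (pconj \<phi>s \<phi>) J3 (\<lambda>_. mzero X)"
      using X.Sset_diff[OF _ tsS s3s] as(4) p1 Heq by simp
    have "madd X s3 (madd X ts (mneg X s3)) \<in> Sset X (pconj \<phi>s \<phi>) J3 u3"
      by (rule X.Sset_add[OF s3S d J3s])
    moreover have "madd X s3 (madd X ts (mneg X s3)) = ts"
      using s3c tsc by (metis X.add_assoc X.add_comm X.add_neg_r X.add_zero_r X.neg_closed)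
    ultimately show ?thesis using S3 by auto
  qed
  have "pres B X (insert (b, ts) G)"
    unfolding pres_def
  proof (intro allI impI, elim conjE)
    fix \<phi> w J u assume w: "sol B \<phi> w" and J: "J \<subseteq> {..<fst \<phi>}" and G: "\<forall>j\<in>J. (w j, u j) \<in> insert (b, ts) G"
    obtain N m E where p: "\<phi> = (N, m, E)" by (cases \<phi>) auto
    define J2 where "J2 = {j \<in> J. w j = b}"
    define J1 where "J1 = {j \<in> J. w j \<noteq> b}"
    have uJ2: "\<And>j. j \<in> J2 \<Longrightarrow> u j = ts" using G nb unfolding J2_def by blast
    have GJ1: "\<And>j. j \<in> J1 \<Longrightarrow> (w j, u j) \<in> G" using G unfolding J1_def by blast
    define wt where "wt = (\<lambda>j. case j of 0 \<Rightarrow> b | Suc k \<Rightarrow> w k)"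
    define ut where "ut = (\<lambda>j. case j of 0 \<Rightarrow> ts | Suc k \<Rightarrow> u k)"
    have "sol B (sh \<phi> J2) wt" unfolding B.sol_sh using b w by (auto simp: wt_def J2_def)
    moreover have "Suc ` J1 \<subseteq> {..<fst (sh \<phi> J2)}" using J by (auto simp: fst_sh J1_def)
    ultimately have "(sh \<phi> J2, wt, Suc ` J1, ut) \<in> Q"
      unfolding Qi using GJ1 by (auto simp: fst_sh wt_def ut_def)
    then have "ts \<in> Sset X (sh \<phi> J2) (Suc ` J1) ut" by (rule all)
    then obtain w' where w': "sol X (sh \<phi> J2) w'" "w' 0 = ts" "\<forall>j\<in>Suc ` J1. w' j = ut j"
      unfolding Sset_def by auto
    have s: "sol X \<phi> (\<lambda>j. w' (Suc j))" "\<forall>k\<in>J2. k < fst \<phi> \<longrightarrow> w' (Suc k) = w' 0"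
      using w'(1) X.sol_sh by auto
    have "\<forall>j\<in>J. w' (Suc j) = u j"
    proof
      fix j assume j: "j \<in> J"
      show "w' (Suc j) = u j"
      proof (cases "w j = b")
        case True
        then have "j \<in> J2" using j by (simp add: J2_def)
        then show ?thesis using s(2) J j uJ2 w'(2) by auto
      next
        case False
        then have "j \<in> J1" using j by (simp add: J1_def)
        then show ?thesis using w'(3) by (auto simp: ut_def)
      qed
    qed
    then show "\<exists>w'. sol X \<phi> w' \<and> (\<forall>j\<in>J. w' j = u j)" using s(1) by blast
  qed
  then show ?thesis using tsc by blast
qed


lemma msum_two: "msum M f (Suc (Suc 0)) = madd M (madd M (mzero M) (f 0)) (f (Suc 0))"
  by simp
lemma msum_three: "msum M f (Suc (Suc (Suc 0))) = madd M (madd M (madd M (mzero M) (f 0)) (f (Suc 0))) (f (Suc (Suc 0)))"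
  by simp

lemma extend:
  fixes A :: "('r::ring_1, 'a) rmod" and B :: "('r, 'b) rmod" and X :: "('r, 'x) rmod"
  assumes Am: "right_module A" and Bm: "right_module B" and Xm: "right_module X"
    and dcc: "\<not> (\<exists>\<phi>. (\<forall>n. 0 < fst (\<phi> n)) \<and> (\<forall>n. pp1 X (\<phi> (Suc n)) \<subset> pp1 X (\<phi> n)))"
    and pf: "pure_mono A B f" and g: "g \<in> rhom A X"
  shows "\<exists>h\<in>rhom B X. \<forall>a\<in>mcarrier A. h (f a) = g a"
proof -
  interpret X: rm X by (rule rm.intro[OF Xm])
  interpret B: rm B by (rule rm.intro[OF Bm])
  interpret A: rm A by (rule rm.intro[OF Am])
  have fh: "f \<in> rhom A B" using pf by (simp add: pure_mono_def)
  define G0 where "G0 = (\<lambda>a. (f a, g a)) ` mcarrier A"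
  define AA where "AA = {G. G \<subseteq> mcarrier B \<times> mcarrier X \<and> G0 \<subseteq> G \<and> pres B X G}"
  have pG0: "pres B X G0"
    unfolding pres_def
  proof (intro allI impI, elim conjE)
    fix \<phi> w J u assume w: "sol B \<phi> w" and J: "J \<subseteq> {..<fst \<phi>}" and G: "\<forall>j\<in>J. (w j, u j) \<in> G0"
    define aa where "aa = (\<lambda>j. SOME a. a \<in> mcarrier A \<and> w j = f a \<and> u j = g a)"
    have aa: "aa j \<in> mcarrier A \<and> w j = f (aa j) \<and> u j = g (aa j)" if "j \<in> J" for j
    proof -
      have "\<exists>a. a \<in> mcarrier A \<and> w j = f a \<and> u j = g a" using G that unfolding G0_def by auto
      then show ?thesis unfolding aa_def by (rule someI_ex)
    qed
    obtain w'' where w'': "sol A \<phi> w''" "\<forall>j\<in>J. w'' j = aa j"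
      using pure_sol[OF Am Bm pf w J, of aa] aa by blast
    have "sol X \<phi> (\<lambda>j. g (w'' j))" by (rule sol_hom[OF Am Xm g w''(1)])
    moreover have "\<forall>j\<in>J. g (w'' j) = u j" using w''(2) aa by simp
    ultimately show "\<exists>w'. sol X \<phi> w' \<and> (\<forall>j\<in>J. w' j = u j)" by blast
  qed
  have G0c: "G0 \<subseteq> mcarrier B \<times> mcarrier X"
    unfolding G0_def using rhom_closed[OF fh] rhom_closed[OF g] by auto
  have G0A: "G0 \<in> AA" using pG0 G0c by (simp add: AA_def)
  have "\<forall>C\<in>chains AA. \<exists>U\<in>AA. \<forall>Y\<in>C. Y \<subseteq> U"
  proof
    fix C assume C: "C \<in> chains AA"
    show "\<exists>U\<in>AA. \<forall>Y\<in>C. Y \<subseteq> U"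
    proof (cases "C = {}")
      case True then show ?thesis using G0A by blast
    next
      case False
      have CA: "C \<subseteq> AA" and ch: "chain\<^sub>\<subseteq> C" using C by (auto simp: chains_def)
      have "\<Union>C \<in> AA" unfolding AA_def
      proof (intro CollectI conjI)
        show "\<Union>C \<subseteq> mcarrier B \<times> mcarrier X" using CA by (auto simp: AA_def)
        show "G0 \<subseteq> \<Union>C" using CA False by (auto simp: AA_def)
        show "pres B X (\<Union>C)" by (rule pres_Union[OF ch False]) (use CA in \<open>auto simp: AA_def\<close>)
      qed
      then show ?thesis by blast
    qed
  qed
  then obtain Gm where Gm: "Gm \<in> AA" "\<forall>G\<in>AA. Gm \<subseteq> G \<longrightarrow> G = Gm" using Zorn_Lemma2 by blast
  have Gmc: "Gm \<subseteq> mcarrier B \<times> mcarrier X" and G0m: "G0 \<subseteq> Gm" and pGm: "pres B X Gm"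
    using Gm(1) by (auto simp: AA_def)
  have total: "\<exists>t. (b, t) \<in> Gm" if b: "b \<in> mcarrier B" for b
  proof (rule ccontr)
    assume "\<nexists>t. (b, t) \<in> Gm"
    then have nb: "\<And>t. (b, t) \<notin> Gm" by blast
    obtain t where t: "t \<in> mcarrier X" "pres B X (insert (b, t) Gm)" using ext_step[OF Bm Xm dcc pGm b nb] by blast
    have "insert (b, t) Gm \<in> AA" using t b Gmc G0m by (auto simp: AA_def)
    then have "insert (b, t) Gm = Gm" using Gm(2) by blast
    then show False using nb by blast
  qed
  have uniq: "t1 = t2" if "(b, t1) \<in> Gm" "(b, t2) \<in> Gm" for b t1 t2
  proof -
    have c: "b \<in> mcarrier B" "t1 \<in> mcarrier X" "t2 \<in> mcarrier X" using that Gmc by auto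
    have pr: "\<And>j. j \<in> {0, Suc 0} \<Longrightarrow> (b, if j = 0 then t1 else t2) \<in> Gm" using that by auto
    define \<phi> where "\<phi> = (Suc (Suc 0), Suc 0, \<lambda>i::nat. \<lambda>j::nat. if j = 0 then 1 else - (1::'r))"
    have "sol B \<phi> (\<lambda>_. b)" unfolding \<phi>_def B.sol_eqn1 msum_two using c by (simp add: B.act_uminus)
    moreover have "{0, Suc 0} \<subseteq> {..<fst \<phi>}" by (simp add: \<phi>_def)
    ultimately obtain w' where w': "sol X \<phi> w'" "\<forall>j\<in>{0, Suc 0}. w' j = (if j = 0 then t1 else t2)"
      using presD[where \<phi>=\<phi> and w="\<lambda>_. b" and J="{0, Suc 0}" and u="\<lambda>j. if j = 0 then t1 else t2", OF pGm _ _ pr]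
      by blast
    then have "madd X t1 (mneg X t2) = mzero X"
      unfolding \<phi>_def X.sol_eqn1 msum_two using c by (simp add: X.act_uminus)
    then show ?thesis using X.add_eq_zero_iff c by blast
  qed
  define h where "h = restrict (\<lambda>b. THE t. (b, t) \<in> Gm) (mcarrier B)"
  have hG: "(b, h b) \<in> Gm" if bB: "b \<in> mcarrier B" for b
  proof -
    obtain t where t: "(b, t) \<in> Gm" using total[OF bB] by blast
    have "(b, THE t. (b, t) \<in> Gm) \<in> Gm"
      by (rule theI[of "\<lambda>x. (b, x) \<in> Gm" t, OF t]) (rule uniq[OF _ t])
    then show ?thesis using bB by (simp add: h_def)
  qed
  have hc: "h b \<in> mcarrier X" if "b \<in> mcarrier B" for b using hG[OF that] Gmc by auto
  have hadd: "h (madd B b1 b2) = madd X (h b1) (h b2)" if b: "b1 \<in> mcarrier B" "b2 \<in> mcarrier B" for b1 b2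
  proof -
    define \<phi> where "\<phi> = (Suc (Suc (Suc 0)), Suc 0, \<lambda>i::nat. \<lambda>j::nat. if j = Suc (Suc 0) then - (1::'r) else 1)"
    define w where "w = (\<lambda>j::nat. if j = 0 then b1 else if j = Suc 0 then b2 else madd B b1 b2)"
    define u where "u = (\<lambda>j::nat. if j = 0 then h b1 else if j = Suc 0 then h b2 else h (madd B b1 b2))"
    have "sol B \<phi> w" unfolding \<phi>_def B.sol_eqn1 msum_three using b
      by (auto simp: w_def B.act_uminus less_Suc_eq)
    moreover have "{0, Suc 0, Suc (Suc 0)} \<subseteq> {..<fst \<phi>}" by (simp add: \<phi>_def)
    moreover have "\<forall>j\<in>{0, Suc 0, Suc (Suc 0)}. (w j, u j) \<in> Gm" using hG b by (auto simp: w_def u_def)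
    ultimately obtain w' where w': "sol X \<phi> w'" "\<forall>j\<in>{0, Suc 0, Suc (Suc 0)}. w' j = u j"
      using presD[OF pGm] by metis
    then have "madd X (madd X (h b1) (h b2)) (mneg X (h (madd B b1 b2))) = mzero X"
      unfolding \<phi>_def X.sol_eqn1 msum_three using hc b by (simp add: X.act_uminus u_def)
    then show ?thesis using X.add_eq_zero_iff hc b by (metis B.add_closed X.add_closed)
  qed
  have hact: "h (mact B b r) = mact X (h b) r" if b: "b \<in> mcarrier B" for b r
  proof -
    define \<phi> where "\<phi> = (Suc (Suc 0), Suc 0, \<lambda>i::nat. \<lambda>j::nat. if j = 0 then r else - (1::'r))"
    define w where "w = (\<lambda>j::nat. if j = 0 then b else mact B b r)"
    define u where "u = (\<lambda>j::nat. if j = 0 then h b else h (mact B b r))"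
    have "sol B \<phi> w" unfolding \<phi>_def B.sol_eqn1 msum_two using b
      by (auto simp: w_def B.act_uminus less_Suc_eq)
    moreover have "{0, Suc 0} \<subseteq> {..<fst \<phi>}" by (simp add: \<phi>_def)
    moreover have "\<forall>j\<in>{0, Suc 0}. (w j, u j) \<in> Gm" using hG b by (auto simp: w_def u_def)
    ultimately obtain w' where w': "sol X \<phi> w'" "\<forall>j\<in>{0, Suc 0}. w' j = u j"
      using presD[OF pGm] by metis
    then have "madd X (mact X (h b) r) (mneg X (h (mact B b r))) = mzero X"
      unfolding \<phi>_def X.sol_eqn1 msum_two using hc b by (simp add: X.act_uminus u_def)
    then show ?thesis using X.add_eq_zero_iff hc b by (metis B.act_closed X.act_closed)
  qed
  have "h \<in> rhom B X" unfolding rhom_def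
    using hc hadd hact by (auto simp: h_def PiE_def extensional_def)
  moreover have "\<forall>a\<in>mcarrier A. h (f a) = g a"
  proof
    fix a assume a: "a \<in> mcarrier A"
    have fa: "f a \<in> mcarrier B" using rhom_closed[OF fh a] .
    have "(f a, g a) \<in> Gm" using G0m a unfolding G0_def by blast
    then show "h (f a) = g a" using uniq hG[OF fa] by blast
  qed
  ultimately show ?thesis by blast
qed


theorem lemma5p8:
  fixes \<C> :: "('r::ring_1, 'c) rmod set"
    and T :: "('r, 'm) rmod"
  assumes "cov_finite \<C>"
    and "in_dirlim TYPE('i) \<C> T"
    and "\<forall>(D :: nat \<Rightarrow> ('r, 'c) rmod) c. (\<forall>n. D n \<in> \<C>) \<and> omega_dirsys D c \<longrightarrow> hom_invsys_ML D c T"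
  shows "sigma_pure_injective TYPE('k) TYPE('a) TYPE('b) T"
proof -
  have T: "right_module T" using assms(2) unfolding in_dirlim_def by blast
  have Tst: "\<exists>m. \<forall>k\<ge>m. pp1 T (\<psi> k) = pp1 T (\<psi> m)"
    if pos: "\<And>n. 0 < fst (\<psi> n)" and ch: "\<And>n. \<exists>\<chi>. 0 < fst \<chi> \<and> \<psi> (Suc n) = pconj (\<psi> n) \<chi>" for \<psi>
  proof (rule T_stab[OF assms(1) assms(2) assms(3) pos])
    fix n and M :: "('r, 'c) rmod" assume M: "right_module M"
    obtain \<chi> where \<chi>: "0 < fst \<chi>" "\<psi> (Suc n) = pconj (\<psi> n) \<chi>" using ch by blast
    have "pp1 M (\<psi> (Suc n)) = pp1 M (\<psi> n) \<inter> pp1 M \<chi>"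
      unfolding \<chi>(2) by (rule rm.pp1_pconj[OF rm.intro[OF M] pos \<chi>(1)])
    then show "pp1 M (\<psi> (Suc n)) \<subseteq> pp1 M (\<psi> n)" by blast
  qed
  show ?thesis
    unfolding sigma_pure_injective_def pure_injective_def
  proof (intro allI conjI impI ballI)
    fix I :: "'k set"
    show X: "right_module (dsum I T)" by (rule rm.dsum_module[OF rm.intro[OF T]])
    have dcc: "\<not> (\<exists>\<phi>. (\<forall>n. 0 < fst (\<phi> n)) \<and> (\<forall>n. pp1 (dsum I T) (\<phi> (Suc n)) \<subset> pp1 (dsum I T) (\<phi> n)))"
    proof
      assume "\<exists>\<phi>. (\<forall>n. 0 < fst (\<phi> n)) \<and> (\<forall>n. pp1 (dsum I T) (\<phi> (Suc n)) \<subset> pp1 (dsum I T) (\<phi> n))"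
      then obtain \<phi> where \<phi>: "\<forall>n. 0 < fst (\<phi> n)" "\<forall>n. pp1 (dsum I T) (\<phi> (Suc n)) \<subset> pp1 (dsum I T) (\<phi> n)"
        by blast
      have pos': "\<And>n. 0 < fst (\<phi> n)" using \<phi>(1) by blast
      have sd': "\<And>n. pp1 (dsum I T) (\<phi> (Suc n)) \<subset> pp1 (dsum I T) (\<phi> n)" using \<phi>(2) by blast
      show False by (rule X_noDCC[where \<phi>=\<phi> and I=I, OF T Tst pos' sd'])
    qed
    fix A :: "('r, 'a) rmod" and B :: "('r, 'b) rmod" and f
    assume ABf: "right_module A \<and> right_module B \<and> pure_mono A B f"
    fix g assume g: "g \<in> rhom A (dsum I T)"
    show "\<exists>h\<in>rhom B (dsum I T). \<forall>a\<in>mcarrier A. h (f a) = g a"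
      using extend[OF _ _ X dcc _ g] ABf by blast
  qed
qed

end
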